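(* Let $n\geq 1$ and $k\geq 2$ be integers, and let $w$ be a length-$n$ word over $\Sigma_k$. Then $\operatorname{rankB}_k(w)$ can be computed (from $w$ and $k$) in $O(kn^3)$ time using $O(n)$ space, under the unit-cost RAM model.
   Context: $\Sigma_k=\{1,2,\ldots,k\}$ with $1<2<\cdots<k$, and $\Sigma_k^n$ is the set of length-$n$ words over $\Sigma_k$. Lexicographic order: for $x=x_1\cdots x_m$ and $y=y_1\cdots y_n$, $x<y$ if $x$ is a proper prefix of $y$, or if $x_i<y_i$ for the smallest $i$ with $x_i\neq y_i$. A border of a word $w$ is a word that is both a non-empty proper prefix and a non-empty proper suffix of $w$; $w$ is bordered if it has a border and unbordered otherwise. $\operatorname{rankB}_k(w)$ denotes the rank (position, starting from $1$) of $w$ in the lexicographic listing of all bordered words of length $|w|$ over $\Sigma_k$; for an arbitrary word $w$ of length $n$ this is taken to mean $1$ plus the number of length-$n$ bordered words over $\Sigma_k$ that are lexicographically smaller than $w$. Unit-cost RAM model: integer variables use constant space and integer arithmetic operations take constant time. *)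

theory Defs
  imports Main "HOL-Library.Sublist"
begin

definition word_over :: "nat \<Rightarrow> nat list \<Rightarrow> bool" where
  "word_over k w \<longleftrightarrow> set w \<subseteq> {1..k}"

definition lex_less :: "nat list \<Rightarrow> nat list \<Rightarrow> bool" where
  "lex_less x y \<longleftrightarrow> (x, y) \<in> lexord {(a, b). a < b}"

definition bordered :: "nat list \<Rightarrow> bool" where
  "bordered w \<longleftrightarrow> (\<exists>u. u \<noteq> [] \<and> length u < length w \<and> prefix u w \<and> suffix u w)"

definition rankB :: "nat \<Rightarrow> nat list \<Rightarrow> nat" where
  "rankB k w = 1 + card {v. length v = length w \<and> word_over k v \<and> bordered v \<and> lex_less v w}"

text \<open>Memory: cells indexed by naturals, each holding an unbounded integer (unit cost,
  constant space per cell). Registers are just memory cells addressed directly.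
  Indirect addresses are converted with nat (negative addresses map to cell 0).\<close>

datatype instr =
    LoadConst nat int
  | Add nat nat nat
  | Sub nat nat nat
  | Mul nat nat nat
  | Div nat nat nat
  | LoadInd nat nat
  | StoreInd nat nat
  | Jz nat nat
  | Jneg nat nat
  | Jmp nat

type_synonym mem = "nat \<Rightarrow> int"
type_synonym config = "nat \<times> mem"

fun exec :: "instr \<Rightarrow> nat \<Rightarrow> mem \<Rightarrow> config" where
  "exec (LoadConst i c) pc m = (Suc pc, m(i := c))"
| "exec (Add i j l) pc m = (Suc pc, m(i := m j + m l))"
| "exec (Sub i j l) pc m = (Suc pc, m(i := m j - m l))"
| "exec (Mul i j l) pc m = (Suc pc, m(i := m j * m l))"
| "exec (Div i j l) pc m = (Suc pc, m(i := m j div m l))"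
| "exec (LoadInd i j) pc m = (Suc pc, m(i := m (nat (m j))))"
| "exec (StoreInd i j) pc m = (Suc pc, m(nat (m i) := m j))"
| "exec (Jz i l) pc m = (if m i = 0 then l else Suc pc, m)"
| "exec (Jneg i l) pc m = (if m i < 0 then l else Suc pc, m)"
| "exec (Jmp l) pc m = (l, m)"

fun accessed :: "instr \<Rightarrow> mem \<Rightarrow> nat set" where
  "accessed (LoadConst i c) m = {i}"
| "accessed (Add i j l) m = {i, j, l}"
| "accessed (Sub i j l) m = {i, j, l}"
| "accessed (Mul i j l) m = {i, j, l}"
| "accessed (Div i j l) m = {i, j, l}"
| "accessed (LoadInd i j) m = {i, j, nat (m j)}"
| "accessed (StoreInd i j) m = {i, j, nat (m i)}"
| "accessed (Jz i l) m = {i}"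
| "accessed (Jneg i l) m = {i}"
| "accessed (Jmp l) m = {}"

definition step :: "instr list \<Rightarrow> config \<Rightarrow> config" where
  "step P cf = (if fst cf < length P then exec (P ! fst cf) (fst cf) (snd cf) else cf)"

definition run :: "instr list \<Rightarrow> nat \<Rightarrow> config \<Rightarrow> config" where
  "run P t cf = (step P ^^ t) cf"

definition halted :: "instr list \<Rightarrow> config \<Rightarrow> bool" where
  "halted P cf \<longleftrightarrow> length P \<le> fst cf"

definition accessed_at :: "instr list \<Rightarrow> config \<Rightarrow> nat set" where
  "accessed_at P cf = (if fst cf < length P then accessed (P ! fst cf) (snd cf) else {})"

definition used_cells :: "instr list \<Rightarrow> nat \<Rightarrow> config \<Rightarrow> nat set" where
  "used_cells P t cf = (\<Union>i<t. accessed_at P (run P i cf))"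

text \<open>Input encoding: M[0] = k, M[1] = n, M[2+i] = w_(i+1) for i < n, all other cells 0.
  Output convention: the result is in M[0] when the machine halts.\<close>
definition input_mem :: "nat \<Rightarrow> nat list \<Rightarrow> mem" where
  "input_mem k w = (\<lambda>a. if a = 0 then int k else if a = 1 then int (length w)
                        else if a < length w + 2 then int (w ! (a - 2)) else 0)"

definition init_config :: "nat \<Rightarrow> nat list \<Rightarrow> config" where
  "init_config k w = (0, input_mem k w)"

end

theory Submission
  imports Defs
begin


datatype com = Ins instr | Seq com com | While nat com | IfZ nat com com | IfNeg nat com com

fun len :: "com \<Rightarrow> nat" where
  "len (Ins i) = 1"
| "len (Seq a b) = len a + len b"
| "len (While x c) = len c + 2"
| "len (IfZ x a b) = len a + len b + 2"
| "len (IfNeg x a b) = len a + len b + 2"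

fun compile :: "nat \<Rightarrow> com \<Rightarrow> instr list" where
  "compile s (Ins i) = [i]"
| "compile s (Seq a b) = compile s a @ compile (s + len a) b"
| "compile s (While x c) = Jz x (s + len c + 2) # compile (s+1) c @ [Jmp s]"
| "compile s (IfZ x a b) = Jz x (s + len b + 2) # compile (s+1) b @ [Jmp (s + len b + 2 + len a)] @ compile (s + len b + 2) a"
| "compile s (IfNeg x a b) = Jneg x (s + len b + 2) # compile (s+1) b @ [Jmp (s + len b + 2 + len a)] @ compile (s + len b + 2) a"

lemma length_comp[simp]: "length (compile s c) = len c"
  by (induction c arbitrary: s) auto

fun nonjump :: "instr \<Rightarrow> bool" where
  "nonjump (Jz i l) = False"
| "nonjump (Jneg i l) = False"
| "nonjump (Jmp l) = False"
| "nonjump _ = True"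

lemma exec_nonjump: "nonjump i \<Longrightarrow> exec i pc m = (Suc pc, snd (exec i 0 m))"
  by (cases i) auto

inductive bs :: "com \<Rightarrow> mem \<Rightarrow> nat \<Rightarrow> nat set \<Rightarrow> mem \<Rightarrow> bool" where
  bIns: "nonjump i \<Longrightarrow> bs (Ins i) m 1 (accessed i m) (snd (exec i 0 m))"
| bSeq: "bs a m t1 S1 m1 \<Longrightarrow> bs b m1 t2 S2 m2 \<Longrightarrow> bs (Seq a b) m (t1 + t2) (S1 \<union> S2) m2"
| bWF: "m x = 0 \<Longrightarrow> bs (While x c) m 1 {x} m"
| bWT: "m x \<noteq> 0 \<Longrightarrow> bs c m t1 S1 m1 \<Longrightarrow> bs (While x c) m1 t2 S2 m2 \<Longrightarrow>
          bs (While x c) m (t1 + t2 + 2) (insert x (S1 \<union> S2)) m2"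
| bZT: "m x = 0 \<Longrightarrow> bs a m t S m' \<Longrightarrow> bs (IfZ x a b) m (t + 1) (insert x S) m'"
| bZF: "m x \<noteq> 0 \<Longrightarrow> bs b m t S m' \<Longrightarrow> bs (IfZ x a b) m (t + 2) (insert x S) m'"
| bNT: "m x < 0 \<Longrightarrow> bs a m t S m' \<Longrightarrow> bs (IfNeg x a b) m (t + 1) (insert x S) m'"
| bNF: "\<not> m x < 0 \<Longrightarrow> bs b m t S m' \<Longrightarrow> bs (IfNeg x a b) m (t + 2) (insert x S) m'"

lemma run_add: "run P (a + b) cf = run P b (run P a cf)"
  unfolding run_def add.commute[of a b] funpow_add by simp

lemma run_0[simp]: "run P 0 cf = cf" by (simp add: run_def)
lemma run_1: "run P 1 cf = step P cf" by (simp add: run_def)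

lemma UN_lessThan_add: "(\<Union>i<(a::nat)+b. f i) = (\<Union>i<a. f i) \<union> (\<Union>j<b. f (a + j))"
proof (rule set_eqI)
  fix x
  show "x \<in> (\<Union>i<a+b. f i) \<longleftrightarrow> x \<in> (\<Union>i<a. f i) \<union> (\<Union>j<b. f (a + j))"
  proof
    assume "x \<in> (\<Union>i<a+b. f i)"
    then obtain i where i: "i < a + b" "x \<in> f i" by blast
    show "x \<in> (\<Union>i<a. f i) \<union> (\<Union>j<b. f (a + j))"
    proof (cases "i < a")
      case True then show ?thesis using i by blast
    next
      case False
      then have "a + (i - a) = i" "i - a < b" using i by auto
      then show ?thesis using i by (metis UN_I UnI2 lessThan_iff)
    qed
  next
    assume "x \<in> (\<Union>i<a. f i) \<union> (\<Union>j<b. f (a + j))"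
    then show "x \<in> (\<Union>i<a+b. f i)" by (auto intro: trans_less_add1)
  qed
qed

lemma used_cells_add: "used_cells P (a + b) cf = used_cells P a cf \<union> used_cells P b (run P a cf)"
  unfolding used_cells_def UN_lessThan_add by (simp add: run_add)

lemma run_Suc0: "run P (Suc 0) cf = step P cf" by (simp add: run_def)
lemma used_cells_Suc0: "used_cells P (Suc 0) cf = accessed_at P cf" by (simp add: used_cells_def lessThan_Suc)
lemma used_cells_0[simp]: "used_cells P 0 cf = {}" by (simp add: used_cells_def)
lemma used_cells_1: "used_cells P 1 cf = accessed_at P cf" by (simp add: used_cells_def lessThan_Suc)

definition code_at :: "instr list \<Rightarrow> nat \<Rightarrow> instr list \<Rightarrow> bool" where
  "code_at P s C \<longleftrightarrow> s + length C \<le> length P \<and> (\<forall>j<length C. P ! (s + j) = C ! j)"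

lemma code_at_app1: "code_at P s (C1 @ C2) \<Longrightarrow> code_at P s C1"
  by (auto simp: code_at_def nth_append)
lemma code_at_app2: "code_at P s (C1 @ C2) \<Longrightarrow> code_at P (s + length C1) C2"
  by (auto simp: code_at_def nth_append add.assoc)
lemma code_at_cons1: "code_at P s (i # C) \<Longrightarrow> P ! s = i \<and> s < length P"
  by (auto simp: code_at_def)
lemma code_at_cons2: "code_at P s (i # C) \<Longrightarrow> code_at P (Suc s) C"
  unfolding code_at_def by auto

lemma bs_correct:
  "bs c m t S m' \<Longrightarrow> code_at P s (compile s c) \<Longrightarrow>
   run P t (s, m) = (s + len c, m') \<and> used_cells P t (s, m) = S"
proof (induction arbitrary: s rule: bs.induct)
  case (bIns i m)
  have c: "code_at P s [i]" using bIns.prems by simp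
  from code_at_cons1[OF c] have h: "P ! s = i" "s < length P" by auto
  have e: "exec i s m = (Suc s, snd (exec i 0 m))" by (rule exec_nonjump) (fact bIns.hyps)
  show ?case using h
    by (simp add: run_1 used_cells_1 run_Suc0 used_cells_Suc0 step_def accessed_at_def e)
next
  case (bSeq a m t1 S1 m1 b t2 S2 m2)
  have c: "code_at P s (compile s a @ compile (s + len a) b)" using bSeq.prems by simp
  have c1: "code_at P s (compile s a)" by (rule code_at_app1[OF c])
  have c2: "code_at P (s + len a) (compile (s + len a) b)" using code_at_app2[OF c] by simp
  from bSeq.IH(1)[OF c1] bSeq.IH(2)[OF c2] show ?case
    by (simp add: run_add used_cells_add add.assoc)
next
  case (bWF m x c)
  have cw: "code_at P s (Jz x (s + len c + 2) # (compile (s+1) c @ [Jmp s]))" using bWF.prems by simp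
  from code_at_cons1[OF cw] have h: "P ! s = Jz x (s + len c + 2)" "s < length P" by auto
  show ?case using h bWF.hyps
    by (simp add: run_1 used_cells_1 run_Suc0 used_cells_Suc0 step_def accessed_at_def)
next
  case (bWT m x c t1 S1 m1 t2 S2 m2)
  have cw0: "code_at P s (compile s (While x c))" by fact
  have cw: "code_at P s (Jz x (s + len c + 2) # (compile (s+1) c @ [Jmp s]))" using cw0 by simp
  from code_at_cons1[OF cw] have j1: "P ! s = Jz x (s + len c + 2)" "s < length P" by auto
  have cb: "code_at P (Suc s) (compile (s+1) c @ [Jmp s])" by (rule code_at_cons2[OF cw])
  have cc: "code_at P (s+1) (compile (s+1) c)" using code_at_app1[OF cb] by simp
  have "code_at P (Suc s + len c) [Jmp s]" using code_at_app2[OF cb] by simp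
  from code_at_cons1[OF this] have j2: "P ! (s + 1 + len c) = Jmp s" "s + 1 + len c < length P" by auto
  have r1: "run P 1 (s, m) = (s+1, m)" "used_cells P 1 (s, m) = {x}"
    using j1 bWT.hyps(1) by (simp_all add: run_1 used_cells_1 run_Suc0 used_cells_Suc0 step_def accessed_at_def)
  have r2: "run P t1 (s+1, m) = (s+1+len c, m1)" "used_cells P t1 (s+1, m) = S1"
    using bWT.IH(1)[OF cc] by auto
  have r3: "run P 1 (s+1+len c, m1) = (s, m1)" "used_cells P 1 (s+1+len c, m1) = {}"
    using j2 by (simp_all add: run_1 used_cells_1 run_Suc0 used_cells_Suc0 step_def accessed_at_def)
  have r4: "run P t2 (s, m1) = (s + len (While x c), m2)" "used_cells P t2 (s, m1) = S2"
    using bWT.IH(2)[OF cw0] by auto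
  have e: "t1 + t2 + 2 = 1 + (t1 + (1 + t2))" by simp
  show ?case unfolding e run_add used_cells_add using r1 r2 r3 r4 by auto
next
  case (bZT m x a t S m' b)
  have cw: "code_at P s (Jz x (s + len b + 2) # (compile (s+1) b @ [Jmp (s + len b + 2 + len a)] @ compile (s + len b + 2) a))"
    using bZT.prems by simp
  from code_at_cons1[OF cw] have j1: "P ! s = Jz x (s + len b + 2)" "s < length P" by auto
  have c2: "code_at P (Suc s) (compile (s+1) b @ [Jmp (s + len b + 2 + len a)] @ compile (s + len b + 2) a)"
    by (rule code_at_cons2[OF cw])
  have ca: "code_at P (s + len b + 2) (compile (s + len b + 2) a)"
    using code_at_app2[OF code_at_app2[OF c2]] by simp
  have r1: "run P 1 (s, m) = (s + len b + 2, m)" "used_cells P 1 (s, m) = {x}"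
    using j1 bZT.hyps(1) by (simp_all add: run_1 used_cells_1 run_Suc0 used_cells_Suc0 step_def accessed_at_def)
  have r2: "run P t (s + len b + 2, m) = (s + len b + 2 + len a, m')" "used_cells P t (s + len b + 2, m) = S"
    using bZT.IH[OF ca] by auto
  have e: "t + 1 = 1 + t" by simp
  show ?case unfolding e run_add used_cells_add using r1 r2 by (simp add: add.commute add.left_commute)
next
  case (bZF m x b t S m' a)
  have cw: "code_at P s (Jz x (s + len b + 2) # (compile (s+1) b @ [Jmp (s + len b + 2 + len a)] @ compile (s + len b + 2) a))"
    using bZF.prems by simp
  from code_at_cons1[OF cw] have j1: "P ! s = Jz x (s + len b + 2)" "s < length P" by auto
  have c2: "code_at P (Suc s) (compile (s+1) b @ [Jmp (s + len b + 2 + len a)] @ compile (s + len b + 2) a)"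
    by (rule code_at_cons2[OF cw])
  have cb: "code_at P (s+1) (compile (s+1) b)" using code_at_app1[OF c2] by simp
  have "code_at P (Suc s + len b) [Jmp (s + len b + 2 + len a)]"
    using code_at_app1[OF code_at_app2[OF c2]] by simp
  from code_at_cons1[OF this] have j2: "P ! (s + 1 + len b) = Jmp (s + len b + 2 + len a)" "s + 1 + len b < length P"
    by auto
  have r1: "run P 1 (s, m) = (s+1, m)" "used_cells P 1 (s, m) = {x}"
    using j1 bZF.hyps(1) by (simp_all add: run_1 used_cells_1 run_Suc0 used_cells_Suc0 step_def accessed_at_def)
  have r2: "run P t (s+1, m) = (s+1+len b, m')" "used_cells P t (s+1, m) = S"
    using bZF.IH[OF cb] by auto
  have r3: "run P 1 (s+1+len b, m') = (s + len b + 2 + len a, m')" "used_cells P 1 (s+1+len b, m') = {}"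
    using j2 by (simp_all add: run_1 used_cells_1 run_Suc0 used_cells_Suc0 step_def accessed_at_def)
  have e: "t + 2 = 1 + (t + 1)" by simp
  show ?case unfolding e run_add used_cells_add using r1 r2 r3 by (simp add: add.commute add.left_commute)
next
  case (bNT m x a t S m' b)
  have cw: "code_at P s (Jneg x (s + len b + 2) # (compile (s+1) b @ [Jmp (s + len b + 2 + len a)] @ compile (s + len b + 2) a))"
    using bNT.prems by simp
  from code_at_cons1[OF cw] have j1: "P ! s = Jneg x (s + len b + 2)" "s < length P" by auto
  have c2: "code_at P (Suc s) (compile (s+1) b @ [Jmp (s + len b + 2 + len a)] @ compile (s + len b + 2) a)"
    by (rule code_at_cons2[OF cw])
  have ca: "code_at P (s + len b + 2) (compile (s + len b + 2) a)"
    using code_at_app2[OF code_at_app2[OF c2]] by simp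
  have r1: "run P 1 (s, m) = (s + len b + 2, m)" "used_cells P 1 (s, m) = {x}"
    using j1 bNT.hyps(1) by (simp_all add: run_1 used_cells_1 run_Suc0 used_cells_Suc0 step_def accessed_at_def)
  have r2: "run P t (s + len b + 2, m) = (s + len b + 2 + len a, m')" "used_cells P t (s + len b + 2, m) = S"
    using bNT.IH[OF ca] by auto
  have e: "t + 1 = 1 + t" by simp
  show ?case unfolding e run_add used_cells_add using r1 r2 by (simp add: add.commute add.left_commute)
next
  case (bNF m x b t S m' a)
  have cw: "code_at P s (Jneg x (s + len b + 2) # (compile (s+1) b @ [Jmp (s + len b + 2 + len a)] @ compile (s + len b + 2) a))"
    using bNF.prems by simp
  from code_at_cons1[OF cw] have j1: "P ! s = Jneg x (s + len b + 2)" "s < length P" by auto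
  have c2: "code_at P (Suc s) (compile (s+1) b @ [Jmp (s + len b + 2 + len a)] @ compile (s + len b + 2) a)"
    by (rule code_at_cons2[OF cw])
  have cb: "code_at P (s+1) (compile (s+1) b)" using code_at_app1[OF c2] by simp
  have "code_at P (Suc s + len b) [Jmp (s + len b + 2 + len a)]"
    using code_at_app1[OF code_at_app2[OF c2]] by simp
  from code_at_cons1[OF this] have j2: "P ! (s + 1 + len b) = Jmp (s + len b + 2 + len a)" "s + 1 + len b < length P"
    by auto
  have r1: "run P 1 (s, m) = (s+1, m)" "used_cells P 1 (s, m) = {x}"
    using j1 bNF.hyps(1) by (simp_all add: run_1 used_cells_1 run_Suc0 used_cells_Suc0 step_def accessed_at_def)
  have r2: "run P t (s+1, m) = (s+1+len b, m')" "used_cells P t (s+1, m) = S"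
    using bNF.IH[OF cb] by auto
  have r3: "run P 1 (s+1+len b, m') = (s + len b + 2 + len a, m')" "used_cells P 1 (s+1+len b, m') = {}"
    using j2 by (simp_all add: run_1 used_cells_1 run_Suc0 used_cells_Suc0 step_def accessed_at_def)
  have e: "t + 2 = 1 + (t + 1)" by simp
  show ?case unfolding e run_add used_cells_add using r1 r2 r3 by (simp add: add.commute add.left_commute)
qed

lemma bs_top:
  assumes "bs c m t S m'"
  shows "run (compile 0 c) t (0, m) = (length (compile 0 c), m') \<and> used_cells (compile 0 c) t (0, m) = S"
  using bs_correct[OF assms, of "compile 0 c" 0] by (simp add: code_at_def)


definition hoare :: "(mem \<Rightarrow> bool) \<Rightarrow> com \<Rightarrow> (mem \<Rightarrow> bool) \<Rightarrow> nat \<Rightarrow> nat set \<Rightarrow> bool" where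
  "hoare P c Q T A \<longleftrightarrow> (\<forall>m. P m \<longrightarrow> (\<exists>t S m'. bs c m t S m' \<and> Q m' \<and> t \<le> T \<and> S \<subseteq> A))"

lemma h_conseq:
  assumes "hoare P c Q T A" "\<And>m. P' m \<Longrightarrow> P m" "\<And>m. Q m \<Longrightarrow> Q' m" "T \<le> T'"
  shows "hoare P' c Q' T' A"
  using assms unfolding hoare_def by (meson le_trans)

lemma h_seq:
  assumes "hoare P a R T1 A" "hoare R b Q T2 A"
  shows "hoare P (Seq a b) Q (T1 + T2) A"
  unfolding hoare_def
proof (intro allI impI)
  fix m assume "P m"
  then obtain t1 S1 m1 where 1: "bs a m t1 S1 m1" "R m1" "t1 \<le> T1" "S1 \<subseteq> A"
    using assms(1) unfolding hoare_def by blast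
  then obtain t2 S2 m2 where 2: "bs b m1 t2 S2 m2" "Q m2" "t2 \<le> T2" "S2 \<subseteq> A"
    using assms(2) unfolding hoare_def by blast
  show "\<exists>t S m'. bs (Seq a b) m t S m' \<and> Q m' \<and> t \<le> T1 + T2 \<and> S \<subseteq> A"
    using bSeq[OF 1(1) 2(1)] 1 2 by (intro exI[of _ "t1 + t2"] exI[of _ "S1 \<union> S2"] exI[of _ m2]) auto
qed

lemma h_ins:
  assumes "nonjump i" "\<And>m. P m \<Longrightarrow> Q (snd (exec i 0 m)) \<and> accessed i m \<subseteq> A"
  shows "hoare P (Ins i) Q 1 A"
  unfolding hoare_def using bIns[OF assms(1)] assms(2) by blast

lemma h_pre_ex:
  assumes "\<And>v. hoare (P v) c Q T A"
  shows "hoare (\<lambda>m. \<exists>v. P v m) c Q T A"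
  using assms unfolding hoare_def by blast

lemma h_ifz:
  assumes "hoare (\<lambda>m. P m \<and> m x = 0) a Q T A" "hoare (\<lambda>m. P m \<and> m x \<noteq> 0) b Q T A" "x \<in> A"
  shows "hoare P (IfZ x a b) Q (T + 2) A"
  unfolding hoare_def
proof (intro allI impI)
  fix m assume "P m"
  show "\<exists>t S m'. bs (IfZ x a b) m t S m' \<and> Q m' \<and> t \<le> T + 2 \<and> S \<subseteq> A"
  proof (cases "m x = 0")
    case True
    then obtain t S m' where "bs a m t S m'" "Q m'" "t \<le> T" "S \<subseteq> A"
      using assms(1) \<open>P m\<close> unfolding hoare_def by blast
    then show ?thesis using bZT[of m x, OF True] assms(3) by fastforce
  next
    case False
    then obtain t S m' where "bs b m t S m'" "Q m'" "t \<le> T" "S \<subseteq> A"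
      using assms(2) \<open>P m\<close> unfolding hoare_def by blast
    then show ?thesis using bZF[of m x, OF False] assms(3) by fastforce
  qed
qed

lemma h_ifneg:
  assumes "hoare (\<lambda>m. P m \<and> m x < 0) a Q T A" "hoare (\<lambda>m. P m \<and> \<not> m x < 0) b Q T A" "x \<in> A"
  shows "hoare P (IfNeg x a b) Q (T + 2) A"
  unfolding hoare_def
proof (intro allI impI)
  fix m assume "P m"
  show "\<exists>t S m'. bs (IfNeg x a b) m t S m' \<and> Q m' \<and> t \<le> T + 2 \<and> S \<subseteq> A"
  proof (cases "m x < 0")
    case True
    then obtain t S m' where "bs a m t S m'" "Q m'" "t \<le> T" "S \<subseteq> A"
      using assms(1) \<open>P m\<close> unfolding hoare_def by blast
    then show ?thesis using bNT[of m x, OF True] assms(3) by fastforce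
  next
    case False
    then obtain t S m' where "bs b m t S m'" "Q m'" "t \<le> T" "S \<subseteq> A"
      using assms(2) \<open>P m\<close> unfolding hoare_def by blast
    then show ?thesis using bNF[of m x, OF False] assms(3) by fastforce
  qed
qed

lemma h_while_aux:
  assumes body: "\<And>v. hoare (\<lambda>m. I m \<and> m x \<noteq> 0 \<and> f m = v) c (\<lambda>m. I m \<and> f m < v) T A"
    and xA: "x \<in> A"
  shows "I m \<Longrightarrow> \<exists>t S m'. bs (While x c) m t S m' \<and> I m' \<and> m' x = 0 \<and> t \<le> f m * (T + 2) + 1 \<and> S \<subseteq> A"
proof (induction "f m" arbitrary: m rule: less_induct)
  case less
  show ?case
  proof (cases "m x = 0")
    case True
    then show ?thesis using bWF[of m x, OF True] less.prems xA by fastforce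
  next
    case False
    obtain t1 S1 m1 where 1: "bs c m t1 S1 m1" "I m1" "f m1 < f m" "t1 \<le> T" "S1 \<subseteq> A"
      using body[of "f m"] less.prems False unfolding hoare_def by blast
    obtain t2 S2 m2 where 2: "bs (While x c) m1 t2 S2 m2" "I m2" "m2 x = 0" "t2 \<le> f m1 * (T + 2) + 1" "S2 \<subseteq> A"
      using less.hyps[OF 1(3) 1(2)] by blast
    have "f m1 * (T + 2) + 1 + T + 2 \<le> f m * (T + 2) + 1"
    proof -
      have "Suc (f m1) \<le> f m" using 1(3) by simp
      then have "Suc (f m1) * (T + 2) \<le> f m * (T + 2)" by (rule mult_le_mono1)
      then show ?thesis by simp
    qed
    then have "t1 + t2 + 2 \<le> f m * (T + 2) + 1" using 1(4) 2(4) by linarith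
    then show ?thesis using bWT[of m x, OF False 1(1) 2(1)] 1 2 xA by blast
  qed
qed

lemma h_while:
  assumes body: "\<And>v. hoare (\<lambda>m. I m \<and> m x \<noteq> 0 \<and> f m = v) c (\<lambda>m. I m \<and> f m < v) T A"
    and xA: "x \<in> A"
  shows "hoare (\<lambda>m. I m \<and> f m \<le> N) (While x c) (\<lambda>m. I m \<and> m x = 0) (N * (T + 2) + 1) A"
  unfolding hoare_def
proof (intro allI impI)
  fix m assume h: "I m \<and> f m \<le> N"
  then obtain t S m' where r: "bs (While x c) m t S m'" "I m'" "m' x = 0" "t \<le> f m * (T + 2) + 1" "S \<subseteq> A"
    using h_while_aux[OF body xA] by blast
  have "f m * (T + 2) \<le> N * (T + 2)" using h by (intro mult_le_mono1) auto
  then show "\<exists>t S m'. bs (While x c) m t S m' \<and> (I m' \<and> m' x = 0) \<and> t \<le> N * (T + 2) + 1 \<and> S \<subseteq> A"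
    using r by (intro exI[of _ t] exI[of _ S] exI[of _ m']) auto
qed

fun seqs :: "instr list \<Rightarrow> com" where
  "seqs [] = Ins (LoadConst 0 0)"
| "seqs [i] = Ins i"
| "seqs (i # is) = Seq (Ins i) (seqs is)"

fun execs :: "instr list \<Rightarrow> mem \<Rightarrow> mem" where
  "execs [] m = m"
| "execs (i # is) m = execs is (snd (exec i 0 m))"

fun accs :: "instr list \<Rightarrow> mem \<Rightarrow> nat set" where
  "accs [] m = {}"
| "accs (i # is) m = accessed i m \<union> accs is (snd (exec i 0 m))"

lemma h_seqs_aux:
  "is \<noteq> [] \<Longrightarrow> list_all nonjump is \<Longrightarrow> bs (seqs is) m (length is) (accs is m) (execs is m)"
proof (induction "is" arbitrary: m rule: seqs.induct)
  case 1 then show ?case by simp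
next
  case (2 i) then show ?case using bIns[of i m] by simp
next
  case (3 i j js)
  have "bs (Ins i) m 1 (accessed i m) (snd (exec i 0 m))" using 3 by (intro bIns) simp
  moreover have "bs (seqs (j # js)) (snd (exec i 0 m)) (length (j # js)) (accs (j # js) (snd (exec i 0 m))) (execs (j # js) (snd (exec i 0 m)))"
    using 3 by simp
  ultimately show ?case using bSeq by fastforce
qed

lemma h_seqs:
  assumes "is \<noteq> []" "list_all nonjump is" "\<And>m. P m \<Longrightarrow> Q (execs is m) \<and> accs is m \<subseteq> A"
  shows "hoare P (seqs is) Q (length is) A"
  unfolding hoare_def using h_seqs_aux[OF assms(1,2)] assms(3) by blast



definition words :: "nat \<Rightarrow> nat \<Rightarrow> nat list set" where
  "words k L = {x. length x = L \<and> set x \<subseteq> {1..k}}"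

definition compat :: "nat list \<Rightarrow> nat list \<Rightarrow> bool" where
  "compat p x \<longleftrightarrow> (\<forall>t. t < length p \<longrightarrow> t < length x \<longrightarrow> x ! t = p ! t)"

definition cb :: "nat \<Rightarrow> nat list \<Rightarrow> nat \<Rightarrow> nat" where
  "cb k p L = card {x \<in> words k L. compat p x \<and> bordered x}"

definition cu :: "nat \<Rightarrow> nat list \<Rightarrow> nat \<Rightarrow> nat" where
  "cu k p L = card {x \<in> words k L. compat p x \<and> \<not> bordered x}"

definition hasper :: "nat list \<Rightarrow> nat \<Rightarrow> bool" where
  "hasper p d \<longleftrightarrow> (\<forall>t. d + t < length p \<longrightarrow> p ! (d + t) = p ! t)"

definition coef :: "nat \<Rightarrow> nat list \<Rightarrow> nat \<Rightarrow> nat \<Rightarrow> nat" where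
  "coef k p L j = (if length p \<le> L - j then k ^ (L - j - max j (length p))
                   else (if hasper p (L - j) then 1 else 0))"

definition blen :: "nat list \<Rightarrow> nat \<Rightarrow> bool" where
  "blen x b \<longleftrightarrow> 0 < b \<and> b < length x \<and> (\<forall>t<b. x ! t = x ! (length x - b + t))"

lemma bordered_blen: "bordered x \<longleftrightarrow> (\<exists>b. blen x b)"
proof
  assume "bordered x"
  then obtain u where u: "u \<noteq> []" "length u < length x" "prefix u x" "suffix u x"
    unfolding bordered_def by auto
  from u(3) obtain zs where zs: "x = u @ zs" by (auto simp: prefix_def)
  from u(4) obtain ys where ys: "x = ys @ u" by (auto simp: suffix_def)
  have "blen x (length u)"
    unfolding blen_def
  proof (intro conjI allI impI)
    show "0 < length u" using u(1) by simp
    show "length u < length x" by fact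
    fix t assume t: "t < length u"
    have "x ! t = u ! t" using zs t by (simp add: nth_append)
    moreover have "x ! (length x - length u + t) = u ! t"
      using ys t by (simp add: nth_append)
    ultimately show "x ! t = x ! (length x - length u + t)" by simp
  qed
  then show "\<exists>b. blen x b" by blast
next
  assume "\<exists>b. blen x b"
  then obtain b where b: "0 < b" "b < length x" "\<forall>t<b. x ! t = x ! (length x - b + t)"
    unfolding blen_def by auto
  have eq: "drop (length x - b) x = take b x"
    by (rule nth_equalityI) (use b in auto)
  show "bordered x" unfolding bordered_def
  proof (intro exI conjI)
    show "take b x \<noteq> []" using b by (auto simp: take_eq_Nil)
    show "length (take b x) < length x" using b by simp
    show "prefix (take b x) x" by (rule take_is_prefix)
    show "suffix (take b x) x" unfolding eq[symmetric] by (rule suffix_drop)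
  qed
qed

lemma blen_take:
  assumes "blen (take b x) c" "blen x b"
  shows "blen x c"
proof -
  from assms have b: "0 < b" "b < length x" "\<forall>t<b. x ! t = x ! (length x - b + t)"
    and c: "0 < c" "c < b" "\<forall>t<c. take b x ! t = take b x ! (b - c + t)"
    by (auto simp: blen_def)
  show ?thesis unfolding blen_def
  proof (intro conjI allI impI)
    show "0 < c" "c < length x" using b c by auto
    fix t assume t: "t < c"
    have "x ! t = x ! (b - c + t)" using c(3) t c(2) by auto
    also have "\<dots> = x ! (length x - b + (b - c + t))" using b(3) t c(2) by auto
    also have "length x - b + (b - c + t) = length x - c + t" using t c(2) b(2) by auto
    finally show "x ! t = x ! (length x - c + t)" .
  qed
qed

lemma blen_half:
  assumes "blen x b" "length x < 2 * b"
  shows "blen x (2 * b - length x)"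
proof -
  let ?L = "length x"
  from assms have b: "0 < b" "b < ?L" "\<forall>t<b. x ! t = x ! (?L - b + t)"
    by (auto simp: blen_def)
  show ?thesis unfolding blen_def
  proof (intro conjI allI impI)
    show "0 < 2 * b - ?L" "2 * b - ?L < ?L" using assms b by auto
    fix t assume t: "t < 2 * b - ?L"
    have ie: "?L - (2 * b - ?L) + t = ?L - b + (?L - b + t)" using t b assms by linarith
    have i1: "?L - b + t < b" using t assms b by linarith
    have i2: "t < b" using t assms b by linarith
    have "x ! (?L - (2 * b - ?L) + t) = x ! (?L - b + (?L - b + t))"
      by (simp only: ie)
    also have "\<dots> = x ! (?L - b + t)" using b(3) i1 by metis
    also have "\<dots> = x ! t" using b(3) i2 by metis
    finally show "x ! t = x ! (?L - (2 * b - ?L) + t)" by simp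
  qed
qed

definition goodj :: "nat list \<Rightarrow> nat \<Rightarrow> bool" where
  "goodj x j \<longleftrightarrow> 1 \<le> j \<and> 2 * j \<le> length x \<and> \<not> bordered (take j x) \<and>
      (\<forall>t<j. x ! t = x ! (length x - j + t))"

lemma bordered_goodj: "bordered x \<longleftrightarrow> (\<exists>j. goodj x j)"
proof
  assume "bordered x"
  then obtain b0 where "blen x b0" using bordered_blen by auto
  define b where "b = (LEAST b. blen x b)"
  have bb: "blen x b" unfolding b_def by (rule LeastI) fact
  have bmin: "\<And>c. blen x c \<Longrightarrow> b \<le> c" unfolding b_def by (rule Least_le)
  have half: "2 * b \<le> length x"
  proof (rule ccontr)
    assume "\<not> 2 * b \<le> length x"
    then have "blen x (2 * b - length x)" using blen_half bb by auto
    from bmin[OF this] have "b \<le> 2 * b - length x" .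
    then show False using bb by (auto simp: blen_def)
  qed
  have unb: "\<not> bordered (take b x)"
  proof
    assume "bordered (take b x)"
    then obtain c where c: "blen (take b x) c" using bordered_blen by auto
    then have "blen x c" using blen_take bb by blast
    then have "b \<le> c" using bmin by auto
    moreover have "c < b" using c bb by (auto simp: blen_def)
    ultimately show False by simp
  qed
  have "goodj x b" using bb half unb by (auto simp: goodj_def blen_def)
  then show "\<exists>j. goodj x j" by blast
next
  assume "\<exists>j. goodj x j"
  then obtain j where "goodj x j" by blast
  then have "blen x j" by (auto simp: goodj_def blen_def)
  then show "bordered x" using bordered_blen by auto
qed

lemma goodj_unique:
  assumes "goodj x j1" "goodj x j2" shows "j1 = j2"
proof (rule ccontr)
  assume ne: "j1 \<noteq> j2"
  { fix a b assume a: "goodj x a" and b: "goodj x b" and ab: "a < b"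
    let ?L = "length x"
    from a have a': "1 \<le> a" "\<forall>t<a. x ! t = x ! (?L - a + t)" by (auto simp: goodj_def)
    from b have b': "2 * b \<le> ?L" "\<not> bordered (take b x)" "\<forall>t<b. x ! t = x ! (?L - b + t)"
      by (auto simp: goodj_def)
    have "blen (take b x) a" unfolding blen_def
    proof (intro conjI allI impI)
      show "0 < a" "a < length (take b x)" using a' ab b' by auto
      fix t assume t: "t < a"
      have "take b x ! (length (take b x) - a + t) = x ! (b - a + t)"
        using t ab b' by auto
      also have "\<dots> = x ! (?L - b + (b - a + t))" using b'(3) t ab by auto
      also have "?L - b + (b - a + t) = ?L - a + t" using t ab b' by auto
      also have "x ! \<dots> = x ! t" using a'(2) t by auto
      also have "\<dots> = take b x ! t" using t ab by auto
      finally show "take b x ! t = take b x ! (length (take b x) - a + t)" by simp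
    qed
    then have False using b'(2) bordered_blen by auto }
  then show False using assms ne by (metis linorder_neqE_nat)
qed

lemma card_words: "card (words k n) = k ^ n"
proof -
  have "card {xs. set xs \<subseteq> {1..k} \<and> length xs = n} = card {1..k} ^ n"
    by (rule card_lists_length_eq) simp
  then show ?thesis unfolding words_def by (simp add: conj_commute)
qed

lemma finite_words: "finite (words k n)"
proof -
  have "finite {xs. set xs \<subseteq> {1..k} \<and> length xs = n}"
    by (rule finite_lists_length_eq) simp
  then show ?thesis unfolding words_def by (simp add: conj_commute)
qed

lemma compat_append:
  "compat p (u @ v) \<longleftrightarrow> compat p u \<and> compat (drop (length u) p) v"
  unfolding compat_def
proof (intro iffI conjI allI impI)
  fix t
  assume h: "\<forall>t. t < length p \<longrightarrow> t < length (u @ v) \<longrightarrow> (u @ v) ! t = p ! t"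
  { assume "t < length p" "t < length u"
    then show "u ! t = p ! t" using h[rule_format, of t] by (simp add: nth_append) }
  { assume "t < length (drop (length u) p)" "t < length v"
    then show "v ! t = drop (length u) p ! t"
      using h[rule_format, of "length u + t"] by (simp add: nth_append) }
next
  fix t
  assume h: "(\<forall>t. t < length p \<longrightarrow> t < length u \<longrightarrow> u ! t = p ! t) \<and>
    (\<forall>t. t < length (drop (length u) p) \<longrightarrow> t < length v \<longrightarrow> v ! t = drop (length u) p ! t)"
  assume t: "t < length p" "t < length (u @ v)"
  show "(u @ v) ! t = p ! t"
  proof (cases "t < length u")
    case True then show ?thesis using h t by (simp add: nth_append)
  next
    case False
    then show ?thesis using h t False
      by (auto simp: nth_append)
  qed
qed

lemma compat_Nil[simp]: "compat [] x" by (simp add: compat_def)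

lemma compat_set:
  assumes "set q \<subseteq> {1..k}"
  shows "{y \<in> words k l. compat q y} = (\<lambda>z. take l q @ z) ` words k (l - length q)"
proof (intro set_eqI iffI)
  fix y assume "y \<in> {y \<in> words k l. compat q y}"
  then have y: "length y = l" "set y \<subseteq> {1..k}" "compat q y" by (auto simp: words_def)
  let ?r = "min l (length q)"
  have tq: "take ?r y = take l q"
    by (rule nth_equalityI) (use y in \<open>auto simp: compat_def\<close>)
  have "y = take l q @ drop ?r y" using tq by (metis append_take_drop_id)
  moreover have "drop ?r y \<in> words k (l - length q)"
    using y by (auto simp: words_def dest: in_set_dropD)
  ultimately show "y \<in> (\<lambda>z. take l q @ z) ` words k (l - length q)" by blast
next
  fix y assume "y \<in> (\<lambda>z. take l q @ z) ` words k (l - length q)"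
  then obtain z where z: "z \<in> words k (l - length q)" "y = take l q @ z" by blast
  have "length y = l" using z by (auto simp: words_def)
  moreover have "set y \<subseteq> {1..k}" using z assms by (auto simp: words_def dest: in_set_takeD)
  moreover have "compat q y" using z by (auto simp: compat_def nth_append words_def)
  ultimately show "y \<in> {y \<in> words k l. compat q y}" by (auto simp: words_def)
qed

lemma card_compat:
  assumes "set q \<subseteq> {1..k}"
  shows "card {y \<in> words k l. compat q y} = k ^ (l - length q)"
  unfolding compat_set[OF assms]
  by (subst card_image) (auto simp: inj_on_def card_words)

lemma finite_compat: "finite {y \<in> words k l. P y}"
  using finite_words by auto

lemma cb_cu_sum:
  assumes "set p \<subseteq> {1..k}"
  shows "cb k p L + cu k p L = k ^ (L - length p)"
proof -
  have "cb k p L + cu k p L = card ({x \<in> words k L. compat p x \<and> bordered x} \<union> {x \<in> words k L. compat p x \<and> \<not> bordered x})"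
    unfolding cb_def cu_def by (rule card_Un_disjoint[symmetric]) (auto simp: finite_compat)
  also have "{x \<in> words k L. compat p x \<and> bordered x} \<union> {x \<in> words k L. compat p x \<and> \<not> bordered x}
     = {x \<in> words k L. compat p x}" by auto
  finally show ?thesis using card_compat[OF assms] by simp
qed

lemma words_0[simp]: "words k 0 = {[]}" by (auto simp: words_def)

lemma compat_short:
  assumes "j \<le> length p" "set p \<subseteq> {1..k}"
  shows "{x \<in> words k j. compat p x} = {take j p}"
proof -
  have "j - length p = 0" using assms by simp
  then show ?thesis using compat_set[OF assms(2), of j] by simp
qed

lemma cu_short:
  assumes "j \<le> length p" "set p \<subseteq> {1..k}"
  shows "cu k p j = (if bordered (take j p) then 0 else 1)"
proof -
  have e: "\<And>x. (x \<in> words k j \<and> compat p x) \<longleftrightarrow> x = take j p"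
    using compat_short[OF assms] by blast
  have "{x \<in> words k j. compat p x \<and> \<not> bordered x} = {x. x = take j p \<and> \<not> bordered x}"
    using e by blast
  moreover have "{x. x = take j p \<and> \<not> bordered x} = (if bordered (take j p) then {} else {take j p})"
    by auto
  ultimately show ?thesis unfolding cu_def by simp
qed


lemma S_decomp:
  assumes j: "1 \<le> j" "2 * j \<le> L"
  shows "{x \<in> words k L. compat p x \<and> \<not> bordered (take j x) \<and> (\<forall>t<j. x ! t = x ! (L - j + t))}
    = (\<lambda>(u, y). u @ y @ u) ` ({u \<in> words k j. compat p u \<and> \<not> bordered u \<and> compat (drop (L - j) p) u}
        \<times> {y \<in> words k (L - 2 * j). compat (drop j p) y})"
  (is "?S = ?F ` (?A \<times> ?Y)")
proof (intro set_eqI iffI)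
  fix x assume "x \<in> ?S"
  then have x: "length x = L" "set x \<subseteq> {1..k}" "compat p x" "\<not> bordered (take j x)"
    "\<forall>t<j. x ! t = x ! (L - j + t)" by (auto simp: words_def)
  define u where "u = take j x"
  define y where "y = take (L - 2 * j) (drop j x)"
  have dd: "drop (L - 2 * j) (drop j x) = drop (L - j) x" using j by (simp add: algebra_simps)
  have zu: "drop (L - j) x = u"
    by (rule nth_equalityI) (use x j in \<open>auto simp: u_def\<close>)
  have d1: "drop j x = y @ drop (L - 2 * j) (drop j x)" unfolding y_def by (rule append_take_drop_id[symmetric])
  have xe: "x = u @ y @ u"
  proof -
    have "x = take j x @ drop j x" by (rule append_take_drop_id[symmetric])
    also have "\<dots> = u @ y @ u" using d1[unfolded dd zu] u_def by simp
    finally show ?thesis .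
  qed
  have lu: "length u = j" and ly: "length y = L - 2 * j" using x j by (auto simp: u_def y_def)
  have cx: "compat p u \<and> compat (drop j p) y \<and> compat (drop (L - j) p) u"
  proof -
    have "compat p (u @ (y @ u))" using x(3) xe by simp
    then have "compat p u \<and> compat (drop j p) (y @ u)" unfolding compat_append lu .
    moreover have "drop (length y) (drop j p) = drop (L - j) p" using ly j by (simp add: algebra_simps)
    ultimately show ?thesis unfolding compat_append by simp
  qed
  have "u \<in> ?A" using cx x lu by (auto simp: words_def u_def dest: in_set_takeD)
  moreover have "y \<in> ?Y" using cx x ly by (auto simp: words_def y_def dest: in_set_takeD in_set_dropD)
  ultimately show "x \<in> ?F ` (?A \<times> ?Y)" using xe by force
next
  fix x assume "x \<in> ?F ` (?A \<times> ?Y)"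
  then obtain u y where uy: "u \<in> ?A" "y \<in> ?Y" "x = u @ y @ u" by auto
  have lu: "length u = j" and ly: "length y = L - 2 * j" using uy by (auto simp: words_def)
  have lx: "length x = L" using uy lu ly j by simp
  have sx: "set x \<subseteq> {1..k}" using uy by (auto simp: words_def)
  have "drop (length y) (drop j p) = drop (L - j) p" using ly j by (simp add: algebra_simps)
  then have cx: "compat p x" using uy by (simp add: lu compat_append)
  have tx: "take j x = u" using uy lu by simp
  have bx: "\<forall>t<j. x ! t = x ! (L - j + t)"
  proof (intro allI impI)
    fix t assume t: "t < j"
    have "x ! t = u ! t" using uy(3) t lu by (simp add: nth_append)
    moreover have "x ! (L - j + t) = u ! t"
    proof -
      have "L - j + t = length u + length y + t" using lu ly j by simp
      then show ?thesis using uy(3) by (simp add: nth_append)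
    qed
    ultimately show "x ! t = x ! (L - j + t)" by simp
  qed
  show "x \<in> ?S" using lx sx cx tx bx uy by (auto simp: words_def)
qed

lemma card_S:
  assumes j: "1 \<le> j" "2 * j \<le> L" and pL: "length p \<le> L" and pk: "set p \<subseteq> {1..k}"
  shows "card {x \<in> words k L. compat p x \<and> \<not> bordered (take j x) \<and> (\<forall>t<j. x ! t = x ! (L - j + t))}
    = cu k p j * coef k p L j"
proof -
  let ?A = "{u \<in> words k j. compat p u \<and> \<not> bordered u \<and> compat (drop (L - j) p) u}"
  let ?Y = "{y \<in> words k (L - 2 * j). compat (drop j p) y}"
  let ?F = "\<lambda>(u, y). u @ y @ u"
  have inj: "inj_on ?F (?A \<times> ?Y)"
  proof (rule inj_onI)
    fix a b assume a: "a \<in> ?A \<times> ?Y" and b: "b \<in> ?A \<times> ?Y" and e: "?F a = ?F b"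
    obtain u y where ua: "a = (u, y)" by (cases a)
    obtain u' y' where ub: "b = (u', y')" by (cases b)
    have l: "length u = j" "length u' = j" "length y = L - 2 * j" "length y' = L - 2 * j"
      using a b ua ub by (auto simp: words_def)
    have "u @ (y @ u) = u' @ (y' @ u')" using e ua ub by simp
    then have "u = u' \<and> y @ u = y' @ u'" using l by (simp add: append_eq_append_conv)
    then show "a = b" using l ua ub by (simp add: append_eq_append_conv)
  qed
  have fin: "finite ?A" "finite ?Y" using finite_words by auto
  have cS: "card (?F ` (?A \<times> ?Y)) = card ?A * card ?Y"
    using card_image[OF inj] card_cartesian_product by simp
  have sd: "set (drop j p) \<subseteq> {1..k}" using pk by (auto dest: in_set_dropD)
  have cY: "card ?Y = k ^ (L - 2 * j - (length p - j))"
    using card_compat[OF sd] by simp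
  show ?thesis
  proof (cases "length p \<le> L - j")
    case True
    then have "drop (L - j) p = []" by simp
    then have "?A = {u \<in> words k j. compat p u \<and> \<not> bordered u}" by simp
    then have cA: "card ?A = cu k p j" by (simp add: cu_def)
    have "L - 2 * j - (length p - j) = L - j - max j (length p)" using True j by (auto simp: max_def)
    then show ?thesis using S_decomp[OF j] cS cA cY True by (simp add: coef_def)
  next
    case False
    then have jp: "j \<le> length p" using j by linarith
    have e: "\<And>x. (x \<in> words k j \<and> compat p x) \<longleftrightarrow> x = take j p"
      using compat_short[OF jp pk] by blast
    have ch: "compat (drop (L - j) p) (take j p) \<longleftrightarrow> hasper p (L - j)"
    proof
      assume h: "compat (drop (L - j) p) (take j p)"
      show "hasper p (L - j)" unfolding hasper_def
      proof (intro allI impI)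
        fix t assume t: "L - j + t < length p"
        then have "t < j" using pL j by linarith
        then show "p ! (L - j + t) = p ! t" using h t unfolding compat_def by auto
      qed
    next
      assume h: "hasper p (L - j)"
      show "compat (drop (L - j) p) (take j p)" unfolding compat_def
        using h unfolding hasper_def by auto
    qed
    have "?A = {x. x = take j p \<and> \<not> bordered x \<and> compat (drop (L - j) p) x}" using e by blast
    also have "\<dots> = (if \<not> bordered (take j p) \<and> hasper p (L - j) then {take j p} else {})"
      using ch by auto
    finally have cA: "card ?A = cu k p j * (if hasper p (L - j) then 1 else 0)"
      using cu_short[OF jp pk] by simp
    have "L - 2 * j - (length p - j) = 0" using False by linarith
    then show ?thesis using S_decomp[OF j] cS cA cY False by (simp add: coef_def)
  qed
qed

theorem cb_rec:
  assumes pL: "length p \<le> L" and pk: "set p \<subseteq> {1..k}"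
  shows "cb k p L = (\<Sum>j\<in>{1..L div 2}. cu k p j * coef k p L j)"
proof -
  let ?S = "\<lambda>j. {x \<in> words k L. compat p x \<and> \<not> bordered (take j x) \<and> (\<forall>t<j. x ! t = x ! (L - j + t))}"
  have eq: "{x \<in> words k L. compat p x \<and> bordered x} = (\<Union>j\<in>{1..L div 2}. ?S j)"
  proof (intro set_eqI iffI)
    fix x assume "x \<in> {x \<in> words k L. compat p x \<and> bordered x}"
    then have x: "x \<in> words k L" "compat p x" "bordered x" by auto
    then obtain j where "goodj x j" using bordered_goodj by auto
    then show "x \<in> (\<Union>j\<in>{1..L div 2}. ?S j)" using x by (auto simp: goodj_def words_def)
  next
    fix x assume "x \<in> (\<Union>j\<in>{1..L div 2}. ?S j)"
    then obtain j where j: "j \<in> {1..L div 2}" "x \<in> ?S j" by blast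
    then have "goodj x j" by (auto simp: goodj_def words_def)
    then show "x \<in> {x \<in> words k L. compat p x \<and> bordered x}" using j bordered_goodj by blast
  qed
  have disj: "\<forall>i\<in>{1..L div 2}. \<forall>j\<in>{1..L div 2}. i \<noteq> j \<longrightarrow> ?S i \<inter> ?S j = {}"
  proof (intro ballI impI)
    fix i j assume ij: "i \<in> {1..L div 2}" "j \<in> {1..L div 2}" "i \<noteq> j"
    show "?S i \<inter> ?S j = {}"
    proof (rule ccontr)
      assume "?S i \<inter> ?S j \<noteq> {}"
      then obtain x where "x \<in> ?S i" "x \<in> ?S j" by blast
      then have "goodj x i" "goodj x j" using ij by (auto simp: goodj_def words_def)
      then show False using goodj_unique ij by blast
    qed
  qed
  have "cb k p L = card (\<Union>j\<in>{1..L div 2}. ?S j)" unfolding cb_def eq ..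
  also have "\<dots> = (\<Sum>j\<in>{1..L div 2}. card (?S j))"
    by (rule card_UN_disjoint) (use disj finite_words in auto)
  also have "\<dots> = (\<Sum>j\<in>{1..L div 2}. cu k p j * coef k p L j)"
    by (rule sum.cong) (use card_S pL pk in auto)
  finally show ?thesis .
qed

lemma compat_snoc_iff:
  assumes "i < length w" "length v = length w"
  shows "compat (take i w @ [a]) v \<longleftrightarrow> take i v = take i w \<and> v ! i = a"
proof -
  have "compat (take i w @ [a]) v \<longleftrightarrow> (\<forall>t<i. v ! t = w ! t) \<and> v ! i = a"
    unfolding compat_def using assms
    by (auto simp: nth_append min_def) (metis less_antisym)
  moreover have "take i v = take i w \<longleftrightarrow> (\<forall>t<i. v ! t = w ! t)"
    using assms by (auto simp: list_eq_iff_nth_eq min_def)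
  ultimately show ?thesis by simp
qed

theorem rank_formula:
  assumes wk: "word_over k w"
  shows "rankB k w = 1 + (\<Sum>i<length w. \<Sum>a\<in>{1..<w ! i}. cb k (take i w @ [a]) (length w))"
proof -
  let ?n = "length w"
  let ?X = "\<lambda>i a. {x \<in> words k ?n. compat (take i w @ [a]) x \<and> bordered x}"
  have eq: "{v. length v = ?n \<and> word_over k v \<and> bordered v \<and> lex_less v w} = (\<Union>i<?n. \<Union>a\<in>{1..<w ! i}. ?X i a)"
  proof (intro set_eqI iffI)
    fix v assume "v \<in> {v. length v = ?n \<and> word_over k v \<and> bordered v \<and> lex_less v w}"
    then have v: "length v = ?n" "set v \<subseteq> {1..k}" "bordered v" "lex_less v w" by (auto simp: word_over_def)
    from v(4) obtain i where i: "i < ?n" "take i v = take i w" "v ! i < w ! i"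
      unfolding lex_less_def lexord_take_index_conv using v(1) by auto
    have "v ! i \<in> {1..k}" using v(2) i(1) v(1) by (metis nth_mem subsetD)
    then have "v ! i \<in> {1..<w ! i}" using i by auto
    moreover have "v \<in> ?X i (v ! i)" using v i compat_snoc_iff[OF i(1) v(1)] by (auto simp: words_def)
    ultimately show "v \<in> (\<Union>i<?n. \<Union>a\<in>{1..<w ! i}. ?X i a)" using i by blast
  next
    fix v assume "v \<in> (\<Union>i<?n. \<Union>a\<in>{1..<w ! i}. ?X i a)"
    then obtain i a where ia: "i < ?n" "a \<in> {1..<w ! i}" "v \<in> ?X i a" by blast
    then have v: "length v = ?n" "set v \<subseteq> {1..k}" "bordered v" by (auto simp: words_def)
    have "take i v = take i w" "v ! i = a" using compat_snoc_iff[OF ia(1) v(1)] ia by auto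
    then have "lex_less v w" unfolding lex_less_def lexord_take_index_conv using ia v(1) by auto
    then show "v \<in> {v. length v = ?n \<and> word_over k v \<and> bordered v \<and> lex_less v w}"
      using v by (auto simp: word_over_def)
  qed
  have d1: "?X i a \<inter> ?X i a' = {}" if "i < ?n" "a \<noteq> a'" for i a a'
  proof (rule ccontr)
    assume "?X i a \<inter> ?X i a' \<noteq> {}"
    then obtain v where v: "v \<in> ?X i a" "v \<in> ?X i a'" by blast
    then have lv: "length v = ?n" by (auto simp: words_def)
    have "v ! i = a" "v ! i = a'" using compat_snoc_iff[OF that(1) lv] v by auto
    then show False using that by simp
  qed
  have d2: "\<And>i i'. i < ?n \<Longrightarrow> i' < ?n \<Longrightarrow> i < i' \<Longrightarrow>
      (\<Union>a\<in>{1..<w ! i}. ?X i a) \<inter> (\<Union>a\<in>{1..<w ! i'}. ?X i' a) = {}"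
  proof (rule ccontr)
    fix i i' assume ii: "i < ?n" "i' < ?n" "i < i'"
    assume "(\<Union>a\<in>{1..<w ! i}. ?X i a) \<inter> (\<Union>a\<in>{1..<w ! i'}. ?X i' a) \<noteq> {}"
    then obtain v a a' where v: "a \<in> {1..<w ! i}" "a' \<in> {1..<w ! i'}" "v \<in> ?X i a" "v \<in> ?X i' a'" by blast
    have lv: "length v = ?n" using v by (auto simp: words_def)
    have "v ! i = a" using compat_snoc_iff[OF ii(1) lv] v by auto
    moreover have "take i' v = take i' w" using compat_snoc_iff[OF ii(2) lv] v by auto
    then have "v ! i = w ! i" using ii by (metis nth_take)
    ultimately show False using v(1) by simp
  qed
  have "card {v. length v = ?n \<and> word_over k v \<and> bordered v \<and> lex_less v w}
      = (\<Sum>i<?n. card (\<Union>a\<in>{1..<w ! i}. ?X i a))"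
    unfolding eq
  proof (rule card_UN_disjoint)
    show "finite {..<?n}" by simp
    show "\<forall>i\<in>{..<?n}. finite (\<Union>a\<in>{1..<w ! i}. ?X i a)" using finite_words by auto
    show "\<forall>i\<in>{..<?n}. \<forall>j\<in>{..<?n}. i \<noteq> j \<longrightarrow>
        (\<Union>a\<in>{1..<w ! i}. ?X i a) \<inter> (\<Union>a\<in>{1..<w ! j}. ?X j a) = {}"
    proof (intro ballI impI)
      fix i j assume ij: "i \<in> {..<?n}" "j \<in> {..<?n}" "i \<noteq> j"
      show "(\<Union>a\<in>{1..<w ! i}. ?X i a) \<inter> (\<Union>a\<in>{1..<w ! j}. ?X j a) = {}"
      proof (cases "i < j")
        case True then show ?thesis using d2 ij by simp
      next
        case False then have "j < i" using ij by simp
        then show ?thesis using d2[of j i] ij by (simp add: Int_commute)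
      qed
    qed
  qed
  also have "\<dots> = (\<Sum>i<?n. \<Sum>a\<in>{1..<w ! i}. card (?X i a))"
  proof (rule sum.cong)
    fix i assume i: "i \<in> {..<?n}"
    show "card (\<Union>a\<in>{1..<w ! i}. ?X i a) = (\<Sum>a\<in>{1..<w ! i}. card (?X i a))"
    proof (rule card_UN_disjoint)
      show "finite {1..<w ! i}" by simp
      show "\<forall>a\<in>{1..<w ! i}. finite (?X i a)" using finite_words by simp
      show "\<forall>a\<in>{1..<w ! i}. \<forall>a'\<in>{1..<w ! i}. a \<noteq> a' \<longrightarrow> ?X i a \<inter> ?X i a' = {}"
        using d1 i by blast
    qed
  qed simp
  finally show ?thesis unfolding rankB_def cb_def by simp
qed

lemma hasper_snoc:
  assumes "1 \<le> d" "d \<le> i" "i \<le> length w"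
  shows "hasper (take i w @ [a]) d \<longleftrightarrow> hasper (take i w) d \<and> a = w ! (i - d)"
proof
  assume h: "hasper (take i w @ [a]) d"
  have "hasper (take i w) d" unfolding hasper_def
  proof (intro allI impI)
    fix t assume t: "d + t < length (take i w)"
    then show "take i w ! (d + t) = take i w ! t"
      using h[unfolded hasper_def, rule_format, of t] assms by (auto simp: nth_append)
  qed
  moreover have "a = w ! (i - d)"
    using h[unfolded hasper_def, rule_format, of "i - d"] assms by (auto simp: nth_append)
  ultimately show "hasper (take i w) d \<and> a = w ! (i - d)" by simp
next
  assume h: "hasper (take i w) d \<and> a = w ! (i - d)"
  show "hasper (take i w @ [a]) d" unfolding hasper_def
  proof (intro allI impI)
    fix t assume t: "d + t < length (take i w @ [a])"
    show "(take i w @ [a]) ! (d + t) = (take i w @ [a]) ! t"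
    proof (cases "d + t < i")
      case True
      then show ?thesis using h[THEN conjunct1, unfolded hasper_def, rule_format, of t] assms
        by (auto simp: nth_append)
    next
      case False
      then have "d + t = i" using t assms by auto
      then show ?thesis using h assms by (auto simp: nth_append)
    qed
  qed
qed

lemma hasper_long: "length q \<le> d \<Longrightarrow> hasper q d"
  by (auto simp: hasper_def)



lemma h_for:
  assumes cnt: "\<And>j m. J j m \<Longrightarrow> j \<le> N \<and> m x = int (N - j)"
    and body: "\<And>j. j < N \<Longrightarrow> hoare (J j) c (J (Suc j)) T A"
    and xA: "x \<in> A"
  shows "hoare (J 0) (While x c) (J N) (N * (T + 2) + 1) A"
proof -
  let ?I = "\<lambda>m. \<exists>j. J j m"
  have b: "hoare (\<lambda>m. ?I m \<and> m x \<noteq> 0 \<and> nat (m x) = v) c (\<lambda>m. ?I m \<and> nat (m x) < v) T A" for v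
    unfolding hoare_def
  proof (intro allI impI)
    fix m assume h: "?I m \<and> m x \<noteq> 0 \<and> nat (m x) = v"
    then obtain j where j: "J j m" by blast
    have jn: "j \<le> N \<and> m x = int (N - j)" by (rule cnt[OF j])
    with h have jN: "j < N" by auto
    then obtain t S m' where r: "bs c m t S m'" "J (Suc j) m'" "t \<le> T" "S \<subseteq> A"
      using body[OF jN] j unfolding hoare_def by blast
    have "Suc j \<le> N \<and> m' x = int (N - Suc j)" by (rule cnt[OF r(2)])
    then have e1: "nat (m' x) = N - Suc j" by (metis nat_int)
    have e2: "v = N - j" using h jn by (metis nat_int)
    have "nat (m' x) < v" using jN e1 e2 by linarith
    then show "\<exists>t S m'. bs c m t S m' \<and> (?I m' \<and> nat (m' x) < v) \<and> t \<le> T \<and> S \<subseteq> A"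
      using r by blast
  qed
  have w: "hoare (\<lambda>m. ?I m \<and> nat (m x) \<le> N) (While x c) (\<lambda>m. ?I m \<and> m x = 0) (N * (T + 2) + 1) A"
    by (rule h_while[OF b xA])
  show ?thesis
  proof (rule h_conseq[OF w])
    fix m assume "J 0 m" then show "?I m \<and> nat (m x) \<le> N" using cnt by fastforce
  next
    fix m assume "?I m \<and> m x = 0"
    then obtain j where "J j m" "m x = 0" by blast
    with cnt have "j = N" by fastforce
    with \<open>J j m\<close> show "J N m" by simp
  qed simp
qed

lemma execs_append: "execs (xs @ ys) m = execs ys (execs xs m)"
  by (induction xs arbitrary: m) auto

lemma accs_append: "accs (xs @ ys) m = accs xs m \<union> accs ys (execs xs m)"
  by (induction xs arbitrary: m) auto

lemma h_seqs':
  assumes "is \<noteq> []" "list_all nonjump is" "\<And>m. P m \<Longrightarrow> Q (execs is m) \<and> accs is m \<subseteq> A" "length is \<le> T"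
  shows "hoare P (seqs is) Q T A"
  using h_conseq[OF h_seqs[OF assms(1-3)]] assms(4) by blast

lemma h_ifneg':
  assumes "hoare (\<lambda>m. P m \<and> m x < 0) a Q T1 A" "hoare (\<lambda>m. P m \<and> \<not> m x < 0) b Q T2 A" "x \<in> A"
    "max T1 T2 + 2 \<le> T"
  shows "hoare P (IfNeg x a b) Q T A"
proof -
  have "hoare (\<lambda>m. P m \<and> m x < 0) a Q (max T1 T2) A" using assms(1) by (rule h_conseq) auto
  moreover have "hoare (\<lambda>m. P m \<and> \<not> m x < 0) b Q (max T1 T2) A" using assms(2) by (rule h_conseq) auto
  ultimately have "hoare P (IfNeg x a b) Q (max T1 T2 + 2) A" using assms(3) by (rule h_ifneg)
  then show ?thesis by (rule h_conseq) (use assms(4) in auto)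
qed

lemma h_ifz':
  assumes "hoare (\<lambda>m. P m \<and> m x = 0) a Q T1 A" "hoare (\<lambda>m. P m \<and> m x \<noteq> 0) b Q T2 A" "x \<in> A"
    "max T1 T2 + 2 \<le> T"
  shows "hoare P (IfZ x a b) Q T A"
proof -
  have "hoare (\<lambda>m. P m \<and> m x = 0) a Q (max T1 T2) A" using assms(1) by (rule h_conseq) auto
  moreover have "hoare (\<lambda>m. P m \<and> m x \<noteq> 0) b Q (max T1 T2) A" using assms(2) by (rule h_conseq) auto
  ultimately have "hoare P (IfZ x a b) Q (max T1 T2 + 2) A" using assms(3) by (rule h_ifz)
  then show ?thesis by (rule h_conseq) (use assms(4) in auto)
qed

lemma h_seq':
  assumes "hoare P a R T1 A" "hoare R b Q T2 A" "T1 + T2 \<le> T"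
  shows "hoare P (Seq a b) Q T A"
  using h_conseq[OF h_seq[OF assms(1,2)]] assms(3) by blast

definition BW :: "nat \<Rightarrow> nat \<Rightarrow> nat" where "BW n k = n + 49 * k"
definition BP :: "nat \<Rightarrow> nat \<Rightarrow> nat" where "BP n k = BW n k + n"
definition BU :: "nat \<Rightarrow> nat \<Rightarrow> nat" where "BU n k = BP n k + n + 1"
definition BQ :: "nat \<Rightarrow> nat \<Rightarrow> nat" where "BQ n k = BU n k + n + 1"
definition SV :: "nat \<Rightarrow> nat \<Rightarrow> nat \<Rightarrow> nat" where "SV n k t = n + (25 + t) * k"

definition Aall :: "nat \<Rightarrow> nat \<Rightarrow> nat set" where
  "Aall n k = {..<26} \<union> SV n k ` {..<24} \<union> {BW n k ..< BQ n k + n + 1} \<union> {..<n+2}"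

lemma nat_int_add'[simp]: "nat (int a + int b) = a + b" by simp

locale inp =
  fixes k n :: nat and w :: "nat list"
  assumes n1: "1 \<le> n" and k2: "2 \<le> k" and lw: "length w = n" and wk: "set w \<subseteq> {1..k}"
begin

abbreviation "bw \<equiv> BW n k"
abbreviation "bp \<equiv> BP n k"
abbreviation "bu \<equiv> BU n k"
abbreviation "bq \<equiv> BQ n k"
abbreviation "AA \<equiv> Aall n k"

lemma bw_ge: "26 \<le> bw" "n + 2 \<le> bw" using k2 by (auto simp: BW_def)

lemma AA_var[simp]: "x < 26 \<Longrightarrow> x \<in> AA" by (simp add: Aall_def)
lemma AA_W[simp]: "s < n \<Longrightarrow> bw + s \<in> AA" by (simp add: Aall_def BQ_def BU_def BP_def)
lemma AA_P[simp]: "e \<le> n \<Longrightarrow> bp + e \<in> AA" by (simp add: Aall_def BQ_def BU_def BP_def)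
lemma AA_U[simp]: "e \<le> n \<Longrightarrow> bu + e \<in> AA" by (simp add: Aall_def BQ_def BU_def BP_def)
lemma AA_Q[simp]: "e \<le> n \<Longrightarrow> bq + e \<in> AA" by (simp add: Aall_def BQ_def BU_def BP_def)

definition lay :: "mem \<Rightarrow> bool" where
  "lay m \<longleftrightarrow> m 0 = int k \<and> m 1 = int n \<and> m 2 = int bw \<and> m 3 = int bp \<and> m 4 = int bu \<and> m 5 = int bq"

definition Wexc :: "nat \<Rightarrow> nat \<Rightarrow> mem \<Rightarrow> bool" where
  "Wexc i a m \<longleftrightarrow> (\<forall>s<n. s \<noteq> i \<longrightarrow> m (bw + s) = int (w ! s)) \<and> m (bw + i) = int a"

definition POWok :: "mem \<Rightarrow> bool" where
  "POWok m \<longleftrightarrow> (\<forall>e\<le>n. m (bp + e) = int (k ^ e))"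

definition unb :: "nat \<Rightarrow> nat" where
  "unb j = (if bordered (take j w) then 0 else 1)"

definition Uok :: "nat \<Rightarrow> mem \<Rightarrow> bool" where
  "Uok i m \<longleftrightarrow> (\<forall>j. 1 \<le> j \<longrightarrow> j \<le> i \<longrightarrow> m (bu + j) = int (unb j))"

definition nq :: "nat \<Rightarrow> nat \<Rightarrow> nat" where
  "nq i d = (if hasper (take i w) d then 0 else 1)"

definition NQok :: "nat \<Rightarrow> mem \<Rightarrow> bool" where
  "NQok i m \<longleftrightarrow> (\<forall>d. 1 \<le> d \<longrightarrow> d \<le> n \<longrightarrow> m (bq + d) = int (nq i d))"

lemma lay_upd[simp]: "6 \<le> x \<Longrightarrow> lay (m(x := v)) = lay m"
  by (simp add: lay_def)

lemma var_ne[simp]: "x < 26 \<Longrightarrow> bw + s \<noteq> x" "x < 26 \<Longrightarrow> bp + s \<noteq> x" "x < 26 \<Longrightarrow> bu + s \<noteq> x" "x < 26 \<Longrightarrow> bq + s \<noteq> x"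
  using bw_ge by (auto simp: BP_def BU_def BQ_def)

lemma var_ne'[simp]: "x < 26 \<Longrightarrow> x \<noteq> bw + s" "x < 26 \<Longrightarrow> x \<noteq> bp + s" "x < 26 \<Longrightarrow> x \<noteq> bu + s" "x < 26 \<Longrightarrow> x \<noteq> bq + s"
  using var_ne by metis+

lemma Wexc_upd[simp]: "x < 26 \<Longrightarrow> Wexc i a (m(x := v)) = Wexc i a m"
  using var_ne by (simp add: Wexc_def)
lemma POWok_upd[simp]: "x < 26 \<Longrightarrow> POWok (m(x := v)) = POWok m"
  using var_ne by (simp add: POWok_def)
lemma Uok_upd[simp]: "x < 26 \<Longrightarrow> Uok i (m(x := v)) = Uok i m"
  using var_ne by (simp add: Uok_def)
lemma NQok_upd[simp]: "x < 26 \<Longrightarrow> NQok i (m(x := v)) = NQok i m"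
  using var_ne by (simp add: NQok_def)


abbreviation P :: "nat \<Rightarrow> nat \<Rightarrow> nat list" where "P i a \<equiv> take i w @ [a]"

definition accv :: "nat \<Rightarrow> nat" where
  "accv i = (\<Sum>i'<i. \<Sum>a\<in>{1..<w ! i'}. cb k (P i' a) n)"

definition accA :: "nat \<Rightarrow> nat \<Rightarrow> nat" where
  "accA i a = accv i + (\<Sum>a'\<in>{1..<a}. cb k (P i a') n)"

definition ILc :: "nat \<Rightarrow> nat \<Rightarrow> mem \<Rightarrow> bool" where
  "ILc i a m \<longleftrightarrow> lay m \<and> m 6 = int i \<and> m 7 = int (n - i) \<and> m 8 = int (w ! i) \<and> m 9 = int a
     \<and> m 10 = int (w ! i + 1 - a) \<and> m 11 = int (i + 1) \<and> m 17 = int (accA i a)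
     \<and> Wexc i a m \<and> POWok m \<and> Uok i m \<and> NQok i m"

definition Ucu :: "nat \<Rightarrow> nat \<Rightarrow> nat \<Rightarrow> mem \<Rightarrow> bool" where
  "Ucu i a L m \<longleftrightarrow> (\<forall>j. i + 1 \<le> j \<longrightarrow> j < L \<longrightarrow> m (bu + j) = int (cu k (P i a) j))"

definition ILb :: "nat \<Rightarrow> nat \<Rightarrow> nat \<Rightarrow> mem \<Rightarrow> bool" where
  "ILb i a L m \<longleftrightarrow> ILc i a m \<and> m 12 = int L \<and> m 13 = int (n + 1 - L) \<and> Ucu i a L m"

definition bsum :: "nat \<Rightarrow> nat \<Rightarrow> nat \<Rightarrow> nat \<Rightarrow> nat" where
  "bsum i a L j = (\<Sum>j'\<in>{1..<j}. cu k (P i a) j' * coef k (P i a) L j')"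

definition IJ :: "nat \<Rightarrow> nat \<Rightarrow> nat \<Rightarrow> nat \<Rightarrow> mem \<Rightarrow> bool" where
  "IJ i a L j m \<longleftrightarrow> ILb i a L m \<and> m 15 = int j \<and> m 16 = int (L div 2 + 1 - j) \<and> m 14 = int (bsum i a L j)"

lemma Ucu_upd[simp]: "x < 26 \<Longrightarrow> Ucu i a L (m(x := v)) = Ucu i a L m"
  using var_ne by (simp add: Ucu_def)

lemma ILc_upd[simp]: "12 \<le> x \<Longrightarrow> x < 26 \<Longrightarrow> x \<noteq> 17 \<Longrightarrow> ILc i a (m(x := v)) = ILc i a m"
  by (simp add: ILc_def)

lemma ILb_upd[simp]: "14 \<le> x \<Longrightarrow> x < 26 \<Longrightarrow> x \<noteq> 17 \<Longrightarrow> ILb i a L (m(x := v)) = ILb i a L m"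
  by (simp add: ILb_def)

lemma IJ_upd[simp]: "18 \<le> x \<Longrightarrow> x < 26 \<Longrightarrow> IJ i a L j (m(x := v)) = IJ i a L j m"
  by (simp add: IJ_def)

lemma P_len: "i < n \<Longrightarrow> length (P i a) = i + 1" using lw by simp

lemma P_set: "i < n \<Longrightarrow> 1 \<le> a \<Longrightarrow> a \<le> k \<Longrightarrow> set (P i a) \<subseteq> {1..k}"
  using wk by (auto dest: in_set_takeD)

lemma unb_cu: "i < n \<Longrightarrow> 1 \<le> a \<Longrightarrow> a \<le> k \<Longrightarrow> j \<le> i \<Longrightarrow> unb j = cu k (P i a) j"
  using cu_short[of j "P i a" k] P_len P_set by (simp add: unb_def)

definition jbody :: com where
  "jbody = Seq (seqs [Sub 21 12 15, Sub 22 15 11])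
     (Seq (IfNeg 22 (seqs [Sub 23 21 11]) (seqs [Sub 23 21 15]))
     (Seq (IfNeg 23
            (Seq (seqs [Add 24 5 21, LoadInd 24 24, Sub 25 6 21, Add 25 2 25, LoadInd 25 25, Sub 25 25 9])
                 (IfZ 24 (IfZ 25 (seqs [LoadConst 18 1]) (seqs [LoadConst 18 0])) (seqs [LoadConst 18 0])))
            (seqs [Add 24 3 23, LoadInd 18 24]))
          (seqs [Add 24 4 15, LoadInd 24 24, Mul 24 24 18, Add 14 14 24, LoadConst 21 1, Add 15 15 21, Sub 16 16 21])))"

lemma IJ_facts:
  assumes "IJ i a L j m"
  shows "lay m" "m 6 = int i" "m 9 = int a" "m 11 = int (i + 1)" "m 12 = int L"
    "m 14 = int (bsum i a L j)" "m 15 = int j" "m 16 = int (L div 2 + 1 - j)"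
    "Wexc i a m" "POWok m" "Uok i m" "NQok i m" "Ucu i a L m"
  using assms by (auto simp: IJ_def ILb_def ILc_def)

lemma lay_facts:
  assumes "lay m" shows "m 0 = int k" "m 1 = int n" "m 2 = int bw" "m 3 = int bp" "m 4 = int bu" "m 5 = int bq"
  using assms by (auto simp: lay_def)

lemma jbody_ok:
  assumes i: "i < n" and a: "1 \<le> a" "a \<le> w ! i" and L: "i + 1 \<le> L" "L \<le> n" and j: "1 \<le> j" "j \<le> L div 2"
  shows "hoare (IJ i a L j) jbody (IJ i a L (j + 1)) 40 AA"
proof -
  have ak: "a \<le> k" using a i wk lw by (meson atLeastAtMost_iff nth_mem order_trans subsetD)
  define R1 where "R1 m \<longleftrightarrow> IJ i a L j m \<and> m 21 = int L - int j \<and> m 22 = int j - int (i + 1)" for m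
  define R2 where "R2 m \<longleftrightarrow> IJ i a L j m \<and> m 21 = int L - int j \<and> m 23 = int L - int j - int (max j (i + 1))" for m
  define R3 where "R3 m \<longleftrightarrow> IJ i a L j m \<and> m 18 = int (coef k (P i a) L j)" for m
  have s1: "hoare (IJ i a L j) (seqs [Sub 21 12 15, Sub 22 15 11]) R1 2 AA"
  proof (rule h_seqs')
    fix m assume h: "IJ i a L j m"
    note f = IJ_facts[OF h]
    show "R1 (execs [Sub 21 12 15, Sub 22 15 11] m) \<and> accs [Sub 21 12 15, Sub 22 15 11] m \<subseteq> AA"
      using h f by (simp add: R1_def)
  qed auto
  have s2: "hoare R1 (IfNeg 22 (seqs [Sub 23 21 11]) (seqs [Sub 23 21 15])) R2 3 AA"
  proof -
    have "hoare (\<lambda>m. R1 m \<and> m 22 < 0) (seqs [Sub 23 21 11]) R2 1 AA"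
    proof (rule h_seqs')
      fix m assume h: "R1 m \<and> m 22 < 0"
      then have f: "m 21 = int L - int j" "m 11 = int (i + 1)" "j < i + 1" "IJ i a L j m"
        by (auto simp: R1_def IJ_facts)
      then show "R2 (execs [Sub 23 21 11] m) \<and> accs [Sub 23 21 11] m \<subseteq> AA"
        by (simp add: R2_def max_def)
    qed auto
    moreover have "hoare (\<lambda>m. R1 m \<and> \<not> m 22 < 0) (seqs [Sub 23 21 15]) R2 1 AA"
    proof (rule h_seqs')
      fix m assume h: "R1 m \<and> \<not> m 22 < 0"
      then have f: "m 21 = int L - int j" "m 15 = int j" "\<not> j < i + 1" "IJ i a L j m"
        by (auto simp: R1_def IJ_facts)
      then show "R2 (execs [Sub 23 21 15] m) \<and> accs [Sub 23 21 15] m \<subseteq> AA"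
        by (simp add: R2_def max_def)
    qed auto
    ultimately show ?thesis by (rule h_ifneg') auto
  qed
  have s3: "hoare R2 (IfNeg 23
            (Seq (seqs [Add 24 5 21, LoadInd 24 24, Sub 25 6 21, Add 25 2 25, LoadInd 25 25, Sub 25 25 9])
                 (IfZ 24 (IfZ 25 (seqs [LoadConst 18 1]) (seqs [LoadConst 18 0])) (seqs [LoadConst 18 0])))
            (seqs [Add 24 3 23, LoadInd 18 24])) R3 20 AA"
  proof (rule h_ifneg')
    define d where "d = L - j"
    define R4 where "R4 m \<longleftrightarrow> IJ i a L j m \<and> \<not> i + 1 \<le> L - j \<and> m 24 = int (nq i d) \<and> m 25 = int (w ! (i - d)) - int a" for m
    have s31: "hoare (\<lambda>m. R2 m \<and> m 23 < 0) (seqs [Add 24 5 21, LoadInd 24 24, Sub 25 6 21, Add 25 2 25, LoadInd 25 25, Sub 25 25 9]) R4 6 AA"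
    proof (rule h_seqs')
      fix m assume h: "R2 m \<and> m 23 < 0"
      then have h1: "IJ i a L j m" "m 21 = int L - int j" "int L - int j - int (max j (i + 1)) < 0"
        by (auto simp: R2_def)
      note f = IJ_facts[OF h1(1)]
      note l = lay_facts[OF f(1)]
      have jL: "j \<le> L" "1 \<le> d" "d \<le> i" "\<not> i + 1 \<le> L - j" using j L h1(3) by (auto simp: d_def)
      have e21: "m 21 = int d" using h1(2) jL by (simp add: d_def)
      have q: "m (bq + d) = int (nq i d)" using f(12) jL L by (auto simp: NQok_def)
      obtain id where id: "id = i - d" by blast
      have idn: "id < n" "int i - int d = int id" using jL i id by auto
      have wv: "m (bw + id) = int (w ! (i - d))"
      proof -
        have "id < n" "id \<noteq> i" using jL i id by auto
        moreover have "\<forall>s<n. s \<noteq> i \<longrightarrow> m (bw + s) = int (w ! s)" using f(9) by (simp add: Wexc_def)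
        ultimately show ?thesis using id by blast
      qed
      have dn: "d \<le> n" using jL i by simp
      show "R4 (execs [Add 24 5 21, LoadInd 24 24, Sub 25 6 21, Add 25 2 25, LoadInd 25 25, Sub 25 25 9] m) \<and>
          accs [Add 24 5 21, LoadInd 24 24, Sub 25 6 21, Add 25 2 25, LoadInd 25 25, Sub 25 25 9] m \<subseteq> AA"
        using h1(1) f l e21 q wv idn jL dn by (simp add: R4_def)
    qed auto
    have s32: "hoare R4 (IfZ 24 (IfZ 25 (seqs [LoadConst 18 1]) (seqs [LoadConst 18 0])) (seqs [LoadConst 18 0])) R3 5 AA"
    proof -
      have hp: "hasper (P i a) d \<longleftrightarrow> hasper (take i w) d \<and> a = w ! (i - d)" if "1 \<le> d" "d \<le> i"
        using hasper_snoc[OF that] i lw by simp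
      have cf: "coef k (P i a) L j = (if hasper (P i a) d then 1 else 0)" if "\<not> i + 1 \<le> L - j"
        using that i lw by (simp add: coef_def d_def)
      have dd: "1 \<le> d" "d \<le> i" if "\<not> i + 1 \<le> L - j" using that j L by (auto simp: d_def)
      have "hoare (\<lambda>m. (R4 m \<and> m 24 = 0) \<and> m 25 = 0) (seqs [LoadConst 18 1]) R3 1 AA"
      proof (rule h_seqs')
        fix m assume h: "(R4 m \<and> m 24 = 0) \<and> m 25 = 0"
        then have "hasper (P i a) d" "IJ i a L j m" "\<not> i + 1 \<le> L - j"
          using hp dd by (auto simp: R4_def nq_def split: if_splits)
        then show "R3 (execs [LoadConst 18 1] m) \<and> accs [LoadConst 18 1] m \<subseteq> AA"
          using cf by (simp add: R3_def)
      qed auto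
      moreover have "hoare (\<lambda>m. (R4 m \<and> m 24 = 0) \<and> m 25 \<noteq> 0) (seqs [LoadConst 18 0]) R3 1 AA"
      proof (rule h_seqs')
        fix m assume h: "(R4 m \<and> m 24 = 0) \<and> m 25 \<noteq> 0"
        then have "\<not> hasper (P i a) d" "IJ i a L j m" "\<not> i + 1 \<le> L - j"
          using hp dd by (auto simp: R4_def)
        then show "R3 (execs [LoadConst 18 0] m) \<and> accs [LoadConst 18 0] m \<subseteq> AA"
          using cf by (simp add: R3_def)
      qed auto
      ultimately have "hoare (\<lambda>m. R4 m \<and> m 24 = 0) (IfZ 25 (seqs [LoadConst 18 1]) (seqs [LoadConst 18 0])) R3 3 AA"
        by (rule h_ifz') auto
      moreover have "hoare (\<lambda>m. R4 m \<and> m 24 \<noteq> 0) (seqs [LoadConst 18 0]) R3 1 AA"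
      proof (rule h_seqs')
        fix m assume h: "R4 m \<and> m 24 \<noteq> 0"
        then have "\<not> hasper (P i a) d" "IJ i a L j m" "\<not> i + 1 \<le> L - j"
          using hp dd by (auto simp: R4_def nq_def split: if_splits)
        then show "R3 (execs [LoadConst 18 0] m) \<and> accs [LoadConst 18 0] m \<subseteq> AA"
          using cf by (simp add: R3_def)
      qed auto
      ultimately show ?thesis by (rule h_ifz') auto
    qed
    show "hoare (\<lambda>m. R2 m \<and> m 23 < 0) (Seq (seqs [Add 24 5 21, LoadInd 24 24, Sub 25 6 21, Add 25 2 25, LoadInd 25 25, Sub 25 25 9])
                 (IfZ 24 (IfZ 25 (seqs [LoadConst 18 1]) (seqs [LoadConst 18 0])) (seqs [LoadConst 18 0]))) R3 11 AA"
      by (rule h_seq'[OF s31 s32]) simp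
  next
    show "hoare (\<lambda>m. R2 m \<and> \<not> m 23 < 0) (seqs [Add 24 3 23, LoadInd 18 24]) R3 2 AA"
    proof (rule h_seqs')
      fix m assume h: "R2 m \<and> \<not> m 23 < 0"
      then have h1: "IJ i a L j m" "m 23 = int L - int j - int (max j (i + 1))" "\<not> int L - int j - int (max j (i + 1)) < 0"
        by (auto simp: R2_def)
      note f = IJ_facts[OF h1(1)]
      note l = lay_facts[OF f(1)]
      define e where "e = L - j - max j (i + 1)"
      have ee: "m 23 = int e" "e \<le> n" "i + 1 \<le> L - j" using h1 j L by (auto simp: e_def)
      have pv: "m (bp + e) = int (k ^ e)" using f(10) ee by (simp add: POWok_def)
      have cf: "coef k (P i a) L j = k ^ e" using ee i lw by (simp add: coef_def e_def)
      show "R3 (execs [Add 24 3 23, LoadInd 18 24] m) \<and> accs [Add 24 3 23, LoadInd 18 24] m \<subseteq> AA"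
        using h1(1) l ee pv cf by (simp add: R3_def)
    qed auto
  qed auto
  have s4: "hoare R3 (seqs [Add 24 4 15, LoadInd 24 24, Mul 24 24 18, Add 14 14 24, LoadConst 21 1, Add 15 15 21, Sub 16 16 21]) (IJ i a L (j + 1)) 7 AA"
  proof (rule h_seqs')
    fix m assume h: "R3 m"
    then have h1: "IJ i a L j m" "m 18 = int (coef k (P i a) L j)" by (auto simp: R3_def)
    note f = IJ_facts[OF h1(1)]
    note l = lay_facts[OF f(1)]
    have jL: "j < L" "j \<le> n" using j L by auto
    have uv: "m (bu + j) = int (cu k (P i a) j)"
    proof (cases "j \<le> i")
      case True
      then show ?thesis using f(11) j unb_cu[OF i a(1) _ True] a i wk lw ak by (simp add: Uok_def)
    next
      case False
      then show ?thesis using f(13) jL by (simp add: Ucu_def)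
    qed
    have bs: "bsum i a L (j + 1) = bsum i a L j + cu k (P i a) j * coef k (P i a) L j"
      using j by (simp add: bsum_def)
    have ILb: "ILb i a L m" using h1(1) by (simp add: IJ_def)
    show "IJ i a L (j + 1) (execs [Add 24 4 15, LoadInd 24 24, Mul 24 24 18, Add 14 14 24, LoadConst 21 1, Add 15 15 21, Sub 16 16 21] m) \<and>
       accs [Add 24 4 15, LoadInd 24 24, Mul 24 24 18, Add 14 14 24, LoadConst 21 1, Add 15 15 21, Sub 16 16 21] m \<subseteq> AA"
      using ILb f l uv bs h1(2) j jL by (simp add: IJ_def of_nat_diff)
  qed auto
  show ?thesis unfolding jbody_def
    by (rule h_seq'[OF s1 h_seq'[OF s2 h_seq'[OF s3 s4]]]) auto
qed


definition Wok :: "mem \<Rightarrow> bool" where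
  "Wok m \<longleftrightarrow> (\<forall>s<n. m (bw + s) = int (w ! s))"

lemma Wok_upd[simp]: "x < 26 \<Longrightarrow> Wok (m(x := v)) = Wok m"
  using var_ne by (simp add: Wok_def)

lemma reg_facts: "bp = bw + n" "bu = bw + 2 * n + 1" "bq = bw + 3 * n + 2"
  by (auto simp: BP_def BU_def BQ_def)

lemma lay_reg[simp]:
  "lay (m(bw + s := v)) = lay m" "lay (m(bp + s := v)) = lay m"
  "lay (m(bu + s := v)) = lay m" "lay (m(bq + s := v)) = lay m"
  using bw_ge by (auto simp: lay_def reg_facts)

lemma Wexc_reg[simp]:
  "i < n \<Longrightarrow> Wexc i a (m(bp + e := v)) = Wexc i a m" "i < n \<Longrightarrow> Wexc i a (m(bu + e := v)) = Wexc i a m"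
  "i < n \<Longrightarrow> Wexc i a (m(bq + e := v)) = Wexc i a m"
  using lw by (auto simp: Wexc_def reg_facts)

lemma Wok_reg[simp]:
  "Wok (m(bp + e := v)) = Wok m" "Wok (m(bu + e := v)) = Wok m" "Wok (m(bq + e := v)) = Wok m"
  by (auto simp: Wok_def reg_facts)

lemma POWok_reg[simp]:
  "s < n \<Longrightarrow> POWok (m(bw + s := v)) = POWok m" "POWok (m(bu + e := v)) = POWok m"
  "POWok (m(bq + e := v)) = POWok m"
  by (auto simp: POWok_def reg_facts)

lemma Uok_reg[simp]:
  "s < n \<Longrightarrow> Uok i (m(bw + s := v)) = Uok i m" "e \<le> n \<Longrightarrow> Uok i (m(bp + e := v)) = Uok i m"
  "i \<le> n \<Longrightarrow> Uok i (m(bq + e := v)) = Uok i m" "i < e \<Longrightarrow> Uok i (m(bu + e := v)) = Uok i m"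
  by (auto simp: Uok_def reg_facts)

lemma NQok_reg[simp]:
  "s < n \<Longrightarrow> NQok i (m(bw + s := v)) = NQok i m" "e \<le> n \<Longrightarrow> NQok i (m(bp + e := v)) = NQok i m"
  "e \<le> n \<Longrightarrow> NQok i (m(bu + e := v)) = NQok i m"
  by (auto simp: NQok_def reg_facts)

lemma Ucu_reg[simp]:
  "s < n \<Longrightarrow> Ucu i a L (m(bw + s := v)) = Ucu i a L m" "e \<le> n \<Longrightarrow> Ucu i a L (m(bp + e := v)) = Ucu i a L m"
  "L \<le> n + 1 \<Longrightarrow> Ucu i a L (m(bq + e := v)) = Ucu i a L m"
  by (auto simp: Ucu_def reg_facts)

lemma Wexc_set: "i < n \<Longrightarrow> Wexc i b m \<Longrightarrow> Wexc i a (m(bw + i := int a))"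
  by (auto simp: Wexc_def)

lemma ILc_updU: "i < L \<Longrightarrow> L \<le> n \<Longrightarrow> ILc i a (m(bu + L := v)) = ILc i a m"
  by (simp add: ILc_def)

definition IL :: "nat \<Rightarrow> nat \<Rightarrow> nat \<Rightarrow> mem \<Rightarrow> bool" where
  "IL i a L m \<longleftrightarrow> ILb i a L m \<and> (i + 1 < L \<longrightarrow> m 14 = int (cb k (P i a) (L - 1)))"

definition jloop :: com where "jloop = While 16 jbody"

lemma jloop_ok:
  assumes i: "i < n" and a: "1 \<le> a" "a \<le> w ! i" and L: "i + 1 \<le> L" "L \<le> n"
  shows "hoare (IJ i a L 1) jloop (IJ i a L (L div 2 + 1)) (n * 42 + 1) AA"
proof -
  let ?J = "\<lambda>jj m. jj \<le> L div 2 \<and> IJ i a L (jj + 1) m"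
  have hw: "hoare (?J 0) (While 16 jbody) (?J (L div 2)) (L div 2 * (40 + 2) + 1) AA"
  proof (rule h_for)
    fix jj m assume "?J jj m"
    then show "jj \<le> L div 2 \<and> m 16 = int (L div 2 - jj)" by (simp add: IJ_def)
  next
    fix jj assume jj: "jj < L div 2"
    show "hoare (?J jj) jbody (?J (Suc jj)) 40 AA"
      using h_conseq[OF jbody_ok[OF i a L, of "jj + 1"]] jj by simp
  qed simp
  have ineq: "L div 2 * (40 + 2) + 1 \<le> n * 42 + 1" using L by simp
  show ?thesis unfolding jloop_def by (rule h_conseq[OF hw _ _ ineq]) auto
qed

definition Lbody :: com where
  "Lbody = Seq (seqs [LoadConst 14 0, LoadConst 15 1, LoadConst 21 2, Div 16 12 21])
     (Seq jloop
       (seqs [Sub 21 12 11, Add 21 3 21, LoadInd 21 21, Sub 21 21 14, Add 22 4 12, StoreInd 22 21,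
              LoadConst 21 1, Add 12 12 21, Sub 13 13 21]))"

lemma Lbody_ok:
  assumes i: "i < n" and a: "1 \<le> a" "a \<le> w ! i" and L: "i + 1 \<le> L" "L \<le> n"
  shows "hoare (IL i a L) Lbody (IL i a (L + 1)) (n * 42 + 14) AA"
proof -
  have ak: "a \<le> k" using a i wk lw by (meson atLeastAtMost_iff nth_mem order_trans subsetD)
  have s1: "hoare (IL i a L) (seqs [LoadConst 14 0, LoadConst 15 1, LoadConst 21 2, Div 16 12 21]) (IJ i a L 1) 4 AA"
  proof (rule h_seqs')
    fix m assume h: "IL i a L m"
    then have b: "ILb i a L m" "m 12 = int L" by (auto simp: IL_def ILb_def)
    have dv: "int L div 2 = int (L div 2)" by (simp add: zdiv_int)
    show "IJ i a L 1 (execs [LoadConst 14 0, LoadConst 15 1, LoadConst 21 2, Div 16 12 21] m) \<and>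
       accs [LoadConst 14 0, LoadConst 15 1, LoadConst 21 2, Div 16 12 21] m \<subseteq> AA"
      using b dv by (simp add: IJ_def bsum_def)
  qed auto
  have s3: "hoare (IJ i a L (L div 2 + 1))
       (seqs [Sub 21 12 11, Add 21 3 21, LoadInd 21 21, Sub 21 21 14, Add 22 4 12, StoreInd 22 21,
              LoadConst 21 1, Add 12 12 21, Sub 13 13 21]) (IL i a (L + 1)) 9 AA"
  proof (rule h_seqs')
    fix m assume h: "IJ i a L (L div 2 + 1) m"
    note f = IJ_facts[OF h]
    note l = lay_facts[OF f(1)]
    have ILb: "ILb i a L m" using h by (simp add: IJ_def)
    then have ILc: "ILc i a m" and m13: "m 13 = int (n + 1 - L)" by (auto simp: ILb_def)
    define e where "e = L - (i + 1)"
    have ee: "int L - (1 + int i) = int e" "e \<le> n" using L by (auto simp: e_def)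
    have pv: "m (bp + e) = int (k ^ e)" using f(10) ee by (simp add: POWok_def)
    have pl: "length (P i a) \<le> L" "set (P i a) \<subseteq> {1..k}" using P_len[OF i] P_set[OF i a(1) ak] L by auto
    have cbv: "bsum i a L (L div 2 + 1) = cb k (P i a) L"
      unfolding bsum_def cb_rec[OF pl] by (rule sum.cong) auto
    have cs: "cb k (P i a) L + cu k (P i a) L = k ^ e" using cb_cu_sum[OF pl(2)] P_len[OF i] by (simp add: e_def)
    have uv: "int (k ^ e) - int (cb k (P i a) L) = int (cu k (P i a) L)" using cs by linarith
    have Ucu': "\<And>v. Ucu i a (L + 1) (m(22 := v, bu + L := int (cu k (P i a) L)))"
      using ILb by (auto simp: ILb_def Ucu_def)
    show "IL i a (L + 1) (execs [Sub 21 12 11, Add 21 3 21, LoadInd 21 21, Sub 21 21 14, Add 22 4 12, StoreInd 22 21,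
              LoadConst 21 1, Add 12 12 21, Sub 13 13 21] m) \<and>
       accs [Sub 21 12 11, Add 21 3 21, LoadInd 21 21, Sub 21 21 14, Add 22 4 12, StoreInd 22 21,
              LoadConst 21 1, Add 12 12 21, Sub 13 13 21] m \<subseteq> AA"
      using f l ee pv cbv uv Ucu' ILc m13 L i by (simp add: IL_def ILb_def ILc_updU of_nat_diff)
  qed auto
  show ?thesis unfolding Lbody_def
    by (rule h_seq'[OF s1 h_seq'[OF jloop_ok[OF i a L] s3]]) auto
qed


definition Lloop :: com where "Lloop = While 13 Lbody"

lemma Lloop_ok:
  assumes i: "i < n" and a: "1 \<le> a" "a \<le> w ! i"
  shows "hoare (IL i a (i + 1)) Lloop (IL i a (n + 1)) (n * (n * 42 + 16) + 1) AA"
proof -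
  let ?J = "\<lambda>ll m. ll \<le> n - i \<and> IL i a (i + 1 + ll) m"
  have hw: "hoare (?J 0) (While 13 Lbody) (?J (n - i)) ((n - i) * (n * 42 + 14 + 2) + 1) AA"
  proof (rule h_for)
    fix ll m assume "?J ll m"
    then show "ll \<le> n - i \<and> m 13 = int (n - i - ll)" by (simp add: IL_def ILb_def)
  next
    fix ll assume ll: "ll < n - i"
    show "hoare (?J ll) Lbody (?J (Suc ll)) (n * 42 + 14) AA"
      using h_conseq[OF Lbody_ok[OF i a, of "i + 1 + ll"]] ll by simp
  qed simp
  have "(n - i) * (n * 42 + 16) \<le> n * (n * 42 + 16)" by (rule mult_le_mono1) simp
  then have ineq: "(n - i) * (n * 42 + 14 + 2) + 1 \<le> n * (n * 42 + 16) + 1" by (simp add: ac_simps)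
  have e: "i + 1 + (n - i) = n + 1" using i by simp
  show ?thesis unfolding Lloop_def by (rule h_conseq[OF hw _ _ ineq]) (use e i in auto)
qed

definition IA :: "nat \<Rightarrow> nat \<Rightarrow> mem \<Rightarrow> bool" where
  "IA i a m \<longleftrightarrow> lay m \<and> m 6 = int i \<and> m 7 = int (n - i) \<and> m 8 = int (w ! i) \<and> m 9 = int a
     \<and> m 10 = int (w ! i + 1 - a) \<and> m 11 = int (i + 1) \<and> m 17 = int (accA i a)
     \<and> Wexc i (if a = 1 then w ! i else a - 1) m \<and> POWok m \<and> Uok i m \<and> NQok i m
     \<and> (2 \<le> a \<longrightarrow> m (bu + (i + 1)) = int (cu k (P i (a - 1)) (i + 1)) \<and> m 14 = int (cb k (P i (a - 1)) n))"

definition abody :: com where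
  "abody = Seq (seqs [Add 21 2 6, StoreInd 21 9, LoadConst 21 0, Add 12 11 21, Sub 13 1 6])
     (Seq Lloop (seqs [Add 17 17 14, LoadConst 21 1, Add 9 9 21, Sub 10 10 21]))"

lemma abody_ok:
  assumes i: "i < n" and a: "1 \<le> a" "a \<le> w ! i"
  shows "hoare (IA i a) abody (IA i (a + 1)) (n * (n * 42 + 16) + 10) AA"
proof -
  have s1: "hoare (IA i a) (seqs [Add 21 2 6, StoreInd 21 9, LoadConst 21 0, Add 12 11 21, Sub 13 1 6]) (IL i a (i + 1)) 5 AA"
  proof (rule h_seqs')
    fix m assume h: "IA i a m"
    then have f: "lay m" "m 6 = int i" "m 7 = int (n - i)" "m 8 = int (w ! i)" "m 9 = int a"
      "m 10 = int (w ! i + 1 - a)" "m 11 = int (i + 1)" "m 17 = int (accA i a)" "POWok m" "Uok i m" "NQok i m"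
      "\<forall>s<n. s \<noteq> i \<longrightarrow> m (bw + s) = int (w ! s)"
      by (auto simp: IA_def Wexc_def)
    note l = lay_facts[OF f(1)]
    have we: "\<And>v. Wexc i a (m(21 := v, bw + i := int a))" "Wexc i a (m(bw + i := int a))"
      using f(12) by (auto simp: Wexc_def)
    show "IL i a (i + 1) (execs [Add 21 2 6, StoreInd 21 9, LoadConst 21 0, Add 12 11 21, Sub 13 1 6] m) \<and>
      accs [Add 21 2 6, StoreInd 21 9, LoadConst 21 0, Add 12 11 21, Sub 13 1 6] m \<subseteq> AA"
      using f l we i by (simp add: IL_def ILb_def ILc_def Ucu_def of_nat_diff)
  qed auto
  have s3: "hoare (IL i a (n + 1)) (seqs [Add 17 17 14, LoadConst 21 1, Add 9 9 21, Sub 10 10 21]) (IA i (a + 1)) 4 AA"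
  proof (rule h_seqs')
    fix m assume h: "IL i a (n + 1) m"
    then have f: "lay m" "m 6 = int i" "m 7 = int (n - i)" "m 8 = int (w ! i)" "m 9 = int a"
      "m 10 = int (w ! i + 1 - a)" "m 11 = int (i + 1)" "m 17 = int (accA i a)" "POWok m" "Uok i m" "NQok i m"
      "Wexc i a m" "m (bu + (i + 1)) = int (cu k (P i a) (i + 1))" "m 14 = int (cb k (P i a) n)"
      using i by (auto simp: IL_def ILb_def ILc_def Ucu_def)
    have acc: "accA i (a + 1) = accA i a + cb k (P i a) n" using a by (simp add: accA_def)
    show "IA i (a + 1) (execs [Add 17 17 14, LoadConst 21 1, Add 9 9 21, Sub 10 10 21] m) \<and>
      accs [Add 17 17 14, LoadConst 21 1, Add 9 9 21, Sub 10 10 21] m \<subseteq> AA"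
      using f acc a by (simp add: IA_def of_nat_diff)
  qed auto
  show ?thesis unfolding abody_def
    by (rule h_seq'[OF s1 h_seq'[OF Lloop_ok[OF i a] s3]]) auto
qed

definition aloop :: com where "aloop = While 10 abody"

lemma aloop_ok:
  assumes i: "i < n"
  shows "hoare (IA i 1) aloop (IA i (w ! i + 1)) (k * (n * (n * 42 + 16) + 12) + 1) AA"
proof -
  have wik: "w ! i \<le> k" using i wk lw by (meson atLeastAtMost_iff nth_mem subsetD)
  let ?J = "\<lambda>aa m. aa \<le> w ! i \<and> IA i (aa + 1) m"
  have hw: "hoare (?J 0) (While 10 abody) (?J (w ! i)) (w ! i * (n * (n * 42 + 16) + 10 + 2) + 1) AA"
  proof (rule h_for)
    fix aa m assume "?J aa m"
    then show "aa \<le> w ! i \<and> m 10 = int (w ! i - aa)" by (simp add: IA_def)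
  next
    fix aa assume aa: "aa < w ! i"
    show "hoare (?J aa) abody (?J (Suc aa)) (n * (n * 42 + 16) + 10) AA"
      using h_conseq[OF abody_ok[OF i, of "aa + 1"]] aa by simp
  qed simp
  have "w ! i * (n * (n * 42 + 16) + 12) \<le> k * (n * (n * 42 + 16) + 12)" by (rule mult_le_mono1) (rule wik)
  then have ineq: "w ! i * (n * (n * 42 + 16) + 10 + 2) + 1 \<le> k * (n * (n * 42 + 16) + 12) + 1" by (simp add: ac_simps)
  show ?thesis unfolding aloop_def by (rule h_conseq[OF hw _ _ ineq]) auto
qed


definition Idx :: "nat \<Rightarrow> nat \<Rightarrow> mem \<Rightarrow> bool" where
  "Idx i d m \<longleftrightarrow> lay m \<and> m 6 = int i \<and> m 7 = int (n - i) \<and> m 17 = int (accv (i + 1))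
     \<and> Wok m \<and> POWok m \<and> Uok (i + 1) m
     \<and> (\<forall>d'. 1 \<le> d' \<longrightarrow> d' < d \<longrightarrow> m (bq + d') = int (nq (i + 1) d'))
     \<and> (\<forall>d'. d \<le> d' \<longrightarrow> d' \<le> n \<longrightarrow> m (bq + d') = int (nq i d'))"

definition Id :: "nat \<Rightarrow> nat \<Rightarrow> mem \<Rightarrow> bool" where
  "Id i d m \<longleftrightarrow> Idx i d m \<and> m 19 = int d \<and> m 20 = int (i + 1 - d)"

lemma Idx_upd[simp]: "18 \<le> x \<Longrightarrow> x < 26 \<Longrightarrow> Idx i d (m(x := v)) = Idx i d m"
  by (simp add: Idx_def)

lemma nq_step:
  assumes "i < n" "1 \<le> d" "d \<le> i"
  shows "nq (i + 1) d = (if nq i d = 0 \<and> w ! i = w ! (i - d) then 0 else 1)"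
proof -
  have t: "take (i + 1) w = take i w @ [w ! i]" using assms lw by (simp add: take_Suc_conv_app_nth)
  show ?thesis unfolding nq_def t using hasper_snoc[of d i w "w ! i"] assms lw by auto
qed

definition dbody :: com where
  "dbody = Seq (seqs [Add 21 2 6, LoadInd 21 21, Sub 22 6 19, Add 22 2 22, LoadInd 22 22, Sub 21 21 22])
     (Seq (IfZ 21 (seqs [LoadConst 23 0]) (seqs [Add 23 5 19, LoadConst 24 1, StoreInd 23 24]))
          (seqs [LoadConst 21 1, Add 19 19 21, Sub 20 20 21]))"

lemma dbody_ok:
  assumes i: "i < n" and d: "1 \<le> d" "d \<le> i"
  shows "hoare (Id i d) dbody (Id i (d + 1)) 14 AA"
proof -
  define R1 where "R1 m \<longleftrightarrow> Id i d m \<and> m 21 = int (w ! i) - int (w ! (i - d))" for m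
  define R2 where "R2 m \<longleftrightarrow> Idx i (d + 1) m \<and> m 19 = int d \<and> m 20 = int (i + 1 - d)" for m
  have s1: "hoare (Id i d) (seqs [Add 21 2 6, LoadInd 21 21, Sub 22 6 19, Add 22 2 22, LoadInd 22 22, Sub 21 21 22]) R1 6 AA"
  proof (rule h_seqs')
    fix m assume h: "Id i d m"
    then have f: "lay m" "m 6 = int i" "m 19 = int d" "Wok m" by (auto simp: Id_def Idx_def)
    note l = lay_facts[OF f(1)]
    obtain id where id: "id = i - d" by blast
    have idn: "id < n" "int i - int d = int id" using d i id by auto
    have wv0: "m (bw + id) = int (w ! id)" "m (bw + i) = int (w ! i)" using f(4) idn i unfolding Wok_def by blast+
    have wv: "m (bw + id) = int (w ! (i - d))" "m (bw + i) = int (w ! i)" using wv0 id by simp_all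
    show "R1 (execs [Add 21 2 6, LoadInd 21 21, Sub 22 6 19, Add 22 2 22, LoadInd 22 22, Sub 21 21 22] m) \<and>
      accs [Add 21 2 6, LoadInd 21 21, Sub 22 6 19, Add 22 2 22, LoadInd 22 22, Sub 21 21 22] m \<subseteq> AA"
      using h f l idn wv i by (simp add: R1_def Id_def)
  qed auto
  have s2: "hoare R1 (IfZ 21 (seqs [LoadConst 23 0]) (seqs [Add 23 5 19, LoadConst 24 1, StoreInd 23 24])) R2 5 AA"
  proof (rule h_ifz')
    show "hoare (\<lambda>m. R1 m \<and> m 21 = 0) (seqs [LoadConst 23 0]) R2 1 AA"
    proof (rule h_seqs')
      fix m assume h: "R1 m \<and> m 21 = 0"
      then have f: "Idx i d m" "m 19 = int d" "m 20 = int (i + 1 - d)" "w ! i = w ! (i - d)"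
        by (auto simp: R1_def Id_def)
      have nqe: "nq (i + 1) d = nq i d" using nq_step[OF i d] f(4) by (simp add: nq_def)
      have "Idx i (d + 1) m"
      proof -
        from f(1) have A: "lay m \<and> m 6 = int i \<and> m 7 = int (n - i) \<and> m 17 = int (accv (i + 1))
          \<and> Wok m \<and> POWok m \<and> Uok (i + 1) m"
          and B: "\<forall>d'. 1 \<le> d' \<longrightarrow> d' < d \<longrightarrow> m (bq + d') = int (nq (i + 1) d')"
          and C: "\<forall>d'. d \<le> d' \<longrightarrow> d' \<le> n \<longrightarrow> m (bq + d') = int (nq i d')"
          unfolding Idx_def by blast+
        have B': "\<forall>d'. 1 \<le> d' \<longrightarrow> d' < d + 1 \<longrightarrow> m (bq + d') = int (nq (i + 1) d')"
        proof (intro allI impI)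
          fix d' assume "1 \<le> d'" "d' < d + 1"
          then consider "d' < d" | "d' = d" by linarith
          then show "m (bq + d') = int (nq (i + 1) d')"
          proof cases
            case 1 then show ?thesis using B \<open>1 \<le> d'\<close> by blast
          next
            case 2 then show ?thesis using C nqe d i by simp
          qed
        qed
        have C': "\<forall>d'. d + 1 \<le> d' \<longrightarrow> d' \<le> n \<longrightarrow> m (bq + d') = int (nq i d')" using C by simp
        show ?thesis unfolding Idx_def using A B' C' by blast
      qed
      then show "R2 (execs [LoadConst 23 0] m) \<and> accs [LoadConst 23 0] m \<subseteq> AA"
        using f by (simp add: R2_def)
    qed auto
  next
    show "hoare (\<lambda>m. R1 m \<and> m 21 \<noteq> 0) (seqs [Add 23 5 19, LoadConst 24 1, StoreInd 23 24]) R2 3 AA"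
    proof (rule h_seqs')
      fix m assume h: "R1 m \<and> m 21 \<noteq> 0"
      then have f: "Idx i d m" "m 19 = int d" "m 20 = int (i + 1 - d)" "w ! i \<noteq> w ! (i - d)" "lay m"
        by (auto simp: R1_def Id_def Idx_def)
      note l = lay_facts[OF f(5)]
      have nv: "nq (i + 1) d = 1" using nq_step[OF i d] f(4) by simp
      have dn: "d \<le> n" using d i by simp
      have I2: "Idx i (d + 1) (m(23 := u, 24 := v, bq + d := 1))" for u v
      proof -
        let ?m = "m(23 := u, 24 := v, bq + d := 1)"
        from f(1) have A: "lay m \<and> m 6 = int i \<and> m 7 = int (n - i) \<and> m 17 = int (accv (i + 1))
          \<and> Wok m \<and> POWok m \<and> Uok (i + 1) m"
          and B: "\<forall>d'. 1 \<le> d' \<longrightarrow> d' < d \<longrightarrow> m (bq + d') = int (nq (i + 1) d')"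
          and C: "\<forall>d'. d \<le> d' \<longrightarrow> d' \<le> n \<longrightarrow> m (bq + d') = int (nq i d')"
          unfolding Idx_def by blast+
        have A': "lay ?m \<and> ?m 6 = int i \<and> ?m 7 = int (n - i) \<and> ?m 17 = int (accv (i + 1))
          \<and> Wok ?m \<and> POWok ?m \<and> Uok (i + 1) ?m"
          using A i by simp
        have B': "\<forall>d'. 1 \<le> d' \<longrightarrow> d' < d + 1 \<longrightarrow> ?m (bq + d') = int (nq (i + 1) d')"
        proof (intro allI impI)
          fix d' assume "1 \<le> d'" "d' < d + 1"
          then consider "d' < d" | "d' = d" by linarith
          then show "?m (bq + d') = int (nq (i + 1) d')"
          proof cases
            case 1 then show ?thesis using B \<open>1 \<le> d'\<close> by simp
          next
            case 2 then show ?thesis using nv by simp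
          qed
        qed
        have C': "\<forall>d'. d + 1 \<le> d' \<longrightarrow> d' \<le> n \<longrightarrow> ?m (bq + d') = int (nq i d')" using C by simp
        show ?thesis unfolding Idx_def using A' B' C' by blast
      qed
      then show "R2 (execs [Add 23 5 19, LoadConst 24 1, StoreInd 23 24] m) \<and>
         accs [Add 23 5 19, LoadConst 24 1, StoreInd 23 24] m \<subseteq> AA"
        using f l dn I2 by (simp add: R2_def)
    qed auto
  qed auto
  have s3: "hoare R2 (seqs [LoadConst 21 1, Add 19 19 21, Sub 20 20 21]) (Id i (d + 1)) 3 AA"
  proof (rule h_seqs')
    fix m assume h: "R2 m"
    then show "Id i (d + 1) (execs [LoadConst 21 1, Add 19 19 21, Sub 20 20 21] m) \<and>
      accs [LoadConst 21 1, Add 19 19 21, Sub 20 20 21] m \<subseteq> AA"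
      using d i by (simp add: R2_def Id_def of_nat_diff)
  qed auto
  show ?thesis unfolding dbody_def
    by (rule h_seq'[OF s1 h_seq'[OF s2 s3]]) auto
qed

end



context inp begin

definition dloop :: com where "dloop = While 20 dbody"

lemma dloop_ok:
  assumes i: "i < n"
  shows "hoare (Id i 1) dloop (Id i (i + 1)) (n * 16 + 1) AA"
proof -
  let ?J = "\<lambda>dd m. dd \<le> i \<and> Id i (dd + 1) m"
  have hw: "hoare (?J 0) (While 20 dbody) (?J i) (i * (14 + 2) + 1) AA"
  proof (rule h_for)
    fix dd m assume "?J dd m"
    then show "dd \<le> i \<and> m 20 = int (i - dd)" by (simp add: Id_def)
  next
    fix dd assume dd: "dd < i"
    show "hoare (?J dd) dbody (?J (Suc dd)) 14 AA"
      using h_conseq[OF dbody_ok[OF i, of "dd + 1"]] dd by simp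
  qed simp
  have ineq: "i * (14 + 2) + 1 \<le> n * 16 + 1" using i by simp
  show ?thesis unfolding dloop_def by (rule h_conseq[OF hw _ _ ineq]) auto
qed

definition IO :: "nat \<Rightarrow> mem \<Rightarrow> bool" where
  "IO i m \<longleftrightarrow> lay m \<and> m 6 = int i \<and> m 7 = int (n - i) \<and> m 17 = int (accv i)
     \<and> Wok m \<and> POWok m \<and> Uok i m \<and> NQok i m"

definition obody :: com where
  "obody = Seq (seqs [Add 21 2 6, LoadInd 8 21, LoadConst 9 1, LoadConst 21 0, Add 10 8 21, LoadConst 21 1, Add 11 6 21])
     (Seq aloop (Seq (seqs [Sub 17 17 14, LoadConst 19 1, LoadConst 21 0, Add 20 6 21])
       (Seq dloop (seqs [LoadConst 21 1, Add 6 6 21, Sub 7 7 21]))))"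

definition TO :: nat where "TO = k * (n * (n * 42 + 16) + 12) + n * 16 + 20"

lemma obody_ok:
  assumes i: "i < n"
  shows "hoare (IO i) obody (IO (i + 1)) TO AA"
proof -
  have wi: "1 \<le> w ! i" "w ! i \<le> k" using i wk lw by (meson atLeastAtMost_iff nth_mem subsetD)+
  have s1: "hoare (IO i) (seqs [Add 21 2 6, LoadInd 8 21, LoadConst 9 1, LoadConst 21 0, Add 10 8 21, LoadConst 21 1, Add 11 6 21]) (IA i 1) 7 AA"
  proof (rule h_seqs')
    fix m assume h: "IO i m"
    then have f: "lay m" "m 6 = int i" "m 7 = int (n - i)" "m 17 = int (accv i)" "Wok m" "POWok m" "Uok i m" "NQok i m"
      by (auto simp: IO_def)
    note l = lay_facts[OF f(1)]
    have wv: "m (bw + i) = int (w ! i)" using f(5) i by (simp add: Wok_def)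
    have we: "Wexc i (w ! i) m" using f(5) wv by (simp add: Wexc_def Wok_def)
    show "IA i 1 (execs [Add 21 2 6, LoadInd 8 21, LoadConst 9 1, LoadConst 21 0, Add 10 8 21, LoadConst 21 1, Add 11 6 21] m) \<and>
      accs [Add 21 2 6, LoadInd 8 21, LoadConst 9 1, LoadConst 21 0, Add 10 8 21, LoadConst 21 1, Add 11 6 21] m \<subseteq> AA"
      using f l wv we i by (simp add: IA_def accA_def)
  qed auto
  have s3: "hoare (IA i (w ! i + 1)) (seqs [Sub 17 17 14, LoadConst 19 1, LoadConst 21 0, Add 20 6 21]) (Id i 1) 4 AA"
  proof (rule h_seqs')
    fix m assume h: "IA i (w ! i + 1) m"
    then have f: "lay m" "m 6 = int i" "m 7 = int (n - i)" "m 17 = int (accA i (w ! i + 1))"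
      "Wexc i (w ! i) m" "POWok m" "Uok i m" "NQok i m"
      "m (bu + (i + 1)) = int (cu k (P i (w ! i)) (i + 1))" "m 14 = int (cb k (P i (w ! i)) n)"
      using wi by (auto simp: IA_def)
    have wok: "Wok m" using f(5) by (auto simp: Wexc_def Wok_def)
    have tw: "P i (w ! i) = take (i + 1) w" using i lw by (simp add: take_Suc_conv_app_nth)
    have cuv: "cu k (P i (w ! i)) (i + 1) = unb (i + 1)"
      using cu_short[of "i + 1" "P i (w ! i)" k] P_len[OF i] P_set[OF i wi] tw i lw by (simp add: unb_def)
    have uok: "Uok (i + 1) m" using f(7) f(9) cuv by (auto simp: Uok_def le_Suc_eq)
    have acc: "accA i (w ! i + 1) = accv (i + 1) + cb k (P i (w ! i)) n"
      using wi by (simp add: accA_def accv_def)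
    have ai: "int (accA i (w ! i + 1)) - int (cb k (P i (w ! i)) n) = int (accv (i + 1))" using acc by simp
    have nqc: "\<forall>d'. 1 \<le> d' \<longrightarrow> d' \<le> n \<longrightarrow> m (bq + d') = int (nq i d')" using f(8) by (simp add: NQok_def)
    show "Id i 1 (execs [Sub 17 17 14, LoadConst 19 1, LoadConst 21 0, Add 20 6 21] m) \<and>
      accs [Sub 17 17 14, LoadConst 19 1, LoadConst 21 0, Add 20 6 21] m \<subseteq> AA"
      using f wok uok nqc ai by (simp add: Id_def Idx_def)
  qed auto
  have s5: "hoare (Id i (i + 1)) (seqs [LoadConst 21 1, Add 6 6 21, Sub 7 7 21]) (IO (i + 1)) 3 AA"
  proof (rule h_seqs')
    fix m assume h: "Id i (i + 1) m"
    then have f: "lay m" "m 6 = int i" "m 7 = int (n - i)" "m 17 = int (accv (i + 1))" "Wok m" "POWok m" "Uok (i + 1) m"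
      "\<forall>d'. 1 \<le> d' \<longrightarrow> d' < i + 1 \<longrightarrow> m (bq + d') = int (nq (i + 1) d')"
      "\<forall>d'. i + 1 \<le> d' \<longrightarrow> d' \<le> n \<longrightarrow> m (bq + d') = int (nq i d')"
      by (auto simp: Id_def Idx_def)
    have nql: "nq i d' = nq (i + 1) d'" if "i + 1 \<le> d'" for d'
      using that hasper_long[of "take i w" d'] hasper_long[of "take (i + 1) w" d'] by (simp add: nq_def)
    have nqok: "NQok (i + 1) m" unfolding NQok_def
    proof (intro allI impI)
      fix d' assume d': "1 \<le> d'" "d' \<le> n"
      show "m (bq + d') = int (nq (i + 1) d')"
      proof (cases "d' < i + 1")
        case True then show ?thesis using f(8) d' by blast
      next
        case False then show ?thesis using f(9) d' nql by simp
      qed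
    qed
    show "IO (i + 1) (execs [LoadConst 21 1, Add 6 6 21, Sub 7 7 21] m) \<and>
      accs [LoadConst 21 1, Add 6 6 21, Sub 7 7 21] m \<subseteq> AA"
      using f nqok i by (simp add: IO_def of_nat_diff)
  qed auto
  show ?thesis unfolding obody_def
    by (rule h_seq'[OF s1 h_seq'[OF aloop_ok[OF i] h_seq'[OF s3 h_seq'[OF dloop_ok[OF i] s5]]]]) (auto simp: TO_def)
qed

definition oloop :: com where "oloop = While 7 obody"

lemma oloop_ok: "hoare (IO 0) oloop (IO n) (n * (TO + 2) + 1) AA"
proof -
  let ?J = "\<lambda>ii m. ii \<le> n \<and> IO ii m"
  have hw: "hoare (?J 0) (While 7 obody) (?J n) (n * (TO + 2) + 1) AA"
  proof (rule h_for)
    fix ii m assume "?J ii m"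
    then show "ii \<le> n \<and> m 7 = int (n - ii)" by (simp add: IO_def)
  next
    fix ii assume ii: "ii < n"
    show "hoare (?J ii) obody (?J (Suc ii)) TO AA"
      using h_conseq[OF obody_ok[OF ii]] ii by simp
  qed simp
  show ?thesis unfolding oloop_def by (rule h_conseq[OF hw]) auto
qed

end



lemma execs_rep: "execs (replicate r (Add 1 1 0)) m = m(1 := m 1 + int r * m 0)"
proof (induction r arbitrary: m)
  case 0 then show ?case by simp
next
  case (Suc r)
  have e: "replicate (Suc r) (Add 1 1 0) = replicate r (Add 1 1 0) @ [Add 1 1 0]"
    by (simp add: replicate_append_same)
  show ?case unfolding e execs_append Suc.IH by (simp add: algebra_simps)
qed

lemma accs_rep: "accs (replicate r (Add 1 1 0)) m \<subseteq> {0, 1}"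
  by (induction r arbitrary: m) auto

definition svc :: "nat \<Rightarrow> instr list" where "svc t = [Add 1 1 0, StoreInd 1 (2 + t)]"

lemma saves:
  assumes m0: "m 0 = int k" and m1: "m 1 = int c" and k: "1 \<le> k" and c: "26 \<le> c" and r: "r \<le> 24"
  shows "execs (concat (map svc [0..<r])) m 0 = int k
    \<and> execs (concat (map svc [0..<r])) m 1 = int (c + r * k)
    \<and> (\<forall>t<r. execs (concat (map svc [0..<r])) m (c + (t + 1) * k) = m (2 + t))
    \<and> (\<forall>a. a \<noteq> 1 \<longrightarrow> (\<forall>t<r. a \<noteq> c + (t + 1) * k) \<longrightarrow> execs (concat (map svc [0..<r])) m a = m a)
    \<and> accs (concat (map svc [0..<r])) m \<subseteq> {0, 1} \<union> (\<lambda>t. 2 + t) ` {..<r} \<union> (\<lambda>t. c + (t + 1) * k) ` {..<r}"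
  using r
proof (induction r)
  case 0 then show ?case using m0 m1 by simp
next
  case (Suc r)
  let ?m = "execs (concat (map svc [0..<r])) m"
  from Suc have IH: "?m 0 = int k" "?m 1 = int (c + r * k)"
    "\<forall>t<r. ?m (c + (t + 1) * k) = m (2 + t)"
    "\<forall>a. a \<noteq> 1 \<longrightarrow> (\<forall>t<r. a \<noteq> c + (t + 1) * k) \<longrightarrow> ?m a = m a"
    "accs (concat (map svc [0..<r])) m \<subseteq> {0, 1} \<union> (\<lambda>t. 2 + t) ` {..<r} \<union> (\<lambda>t. c + (t + 1) * k) ` {..<r}"
    by auto
  have e: "concat (map svc [0..<Suc r]) = concat (map svc [0..<r]) @ svc r" by simp
  have src: "?m (2 + r) = m (2 + r)"
  proof -
    have "2 + r \<noteq> 1" by simp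
    moreover have "\<forall>t<r. 2 + r \<noteq> c + (t + 1) * k" using c Suc.prems k by auto
    ultimately show ?thesis using IH(4) by blast
  qed
  define A where "A = c + (r + 1) * k"
  have A: "A \<noteq> 0" "A \<noteq> 1" "\<forall>t<r. A \<noteq> c + (t + 1) * k" "int c + int r * int k + int k = int A"
    using c k by (auto simp: A_def algebra_simps)
  have ex: "execs (svc r) ?m = ?m(1 := int A, A := ?m (2 + r))"
    using IH(1,2) A(4) by (simp add: svc_def algebra_simps)
  have src2: "(?m(1 := int A)) (2 + r) = ?m (2 + r)" by simp
  show ?case unfolding e execs_append accs_append
  proof (intro conjI)
    show "execs (svc r) ?m 0 = int k" using ex A IH by simp
    show "execs (svc r) ?m 1 = int (c + Suc r * k)" using ex A by (simp add: A_def)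
    show "\<forall>t<Suc r. execs (svc r) ?m (c + (t + 1) * k) = m (2 + t)"
    proof (intro allI impI)
      fix t assume t: "t < Suc r"
      show "execs (svc r) ?m (c + (t + 1) * k) = m (2 + t)"
      proof (cases "t = r")
        case True then show ?thesis using ex src by (simp add: A_def)
      next
        case False
        then have "t < r" using t by simp
        moreover have "c + (t + 1) * k \<noteq> A" using \<open>t < r\<close> k by (simp add: A_def)
        moreover have "c + (t + 1) * k \<noteq> 1" using c by simp
        ultimately show ?thesis using ex IH(3) by simp
      qed
    qed
    show "\<forall>a. a \<noteq> 1 \<longrightarrow> (\<forall>t<Suc r. a \<noteq> c + (t + 1) * k) \<longrightarrow> execs (svc r) ?m a = m a"
    proof (intro allI impI)
      fix a assume a: "a \<noteq> 1" "\<forall>t<Suc r. a \<noteq> c + (t + 1) * k"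
      then have "a \<noteq> A" by (auto simp: A_def)
      then show "execs (svc r) ?m a = m a" using ex a IH(4) by simp
    qed
    have hs: "accs (svc r) ?m \<subseteq> {0, 1, 2 + r, A}" using IH(1,2) A(4) by (auto simp: svc_def algebra_simps)
    have s1: "(\<lambda>t. 2 + t) ` {..<r} \<subseteq> (\<lambda>t. 2 + t) ` {..<Suc r}" by auto
    have s2: "(\<lambda>t. c + (t + 1) * k) ` {..<r} \<subseteq> (\<lambda>t. c + (t + 1) * k) ` {..<Suc r}" by auto
    have s3: "2 + r \<in> (\<lambda>t. 2 + t) ` {..<Suc r}" by (rule image_eqI[of _ _ r]) auto
    have s4: "A \<in> (\<lambda>t. c + (t + 1) * k) ` {..<Suc r}" unfolding A_def by (rule image_eqI[of _ _ r]) auto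
    show "accs (concat (map svc [0..<r])) m \<union> accs (svc r) ?m
      \<subseteq> {0, 1} \<union> (\<lambda>t. 2 + t) ` {..<Suc r} \<union> (\<lambda>t. c + (t + 1) * k) ` {..<Suc r}"
      using IH(5) hs s1 s2 s3 s4 by blast
  qed
qed


definition pro3 :: "instr list" where
  "pro3 = [LoadConst 2 48, Mul 2 2 0, Sub 1 1 2, LoadConst 21 49, Mul 21 21 0, Add 2 1 21, Add 3 2 1,
           LoadConst 21 1, Add 4 3 1, Add 4 4 21, Add 5 4 1, Add 5 5 21]"

definition prologue :: com where
  "prologue = seqs (replicate 24 (Add 1 1 0) @ concat (map svc [0..<24]) @ pro3)"

context inp begin

definition PP :: "mem \<Rightarrow> bool" where
  "PP m \<longleftrightarrow> lay m \<and> (\<forall>t<24. t < n \<longrightarrow> m (SV n k t) = int (w ! t))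
     \<and> (\<forall>t. 24 \<le> t \<longrightarrow> t < n \<longrightarrow> m (2 + t) = int (w ! t)) \<and> (\<forall>a. bw \<le> a \<longrightarrow> m a = 0)"

lemma prologue_ok: "hoare (\<lambda>m. m = input_mem k w) prologue PP 84 AA"
  unfolding prologue_def
proof (rule h_seqs')
  show "replicate 24 (Add 1 1 0) @ concat (map svc [0..<24]) @ pro3 \<noteq> []" by simp
  show "list_all nonjump (replicate 24 (Add 1 1 0) @ concat (map svc [0..<24]) @ pro3)"
    by (simp add: svc_def pro3_def upt_rec list_all_iff)
  show "length (replicate 24 (Add 1 1 0) @ concat (map svc [0..<24]) @ pro3) \<le> 84"
    by (simp add: svc_def pro3_def upt_rec)
next
  fix m assume "m = input_mem k w"
  then have m0: "m = input_mem k w" .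
  define c where "c = n + 24 * k"
  define m1 where "m1 = execs (replicate 24 (Add 1 1 0)) m"
  define m2 where "m2 = execs (concat (map svc [0..<24])) m1"
  have m1e: "m1 = m(1 := int c)" unfolding m1_def execs_rep using m0 lw by (simp add: input_mem_def c_def)
  have c26: "26 \<le> c" using k2 by (simp add: c_def)
  have k1: "1 \<le> k" using k2 by simp
  have h0: "m1 0 = int k" using m1e m0 by (simp add: input_mem_def)
  have h1: "m1 1 = int c" using m1e by simp
  note S = saves[OF h0 h1 k1 c26 order_refl, folded m2_def]
  note sv = S[THEN conjunct1] S[THEN conjunct2, THEN conjunct1] S[THEN conjunct2, THEN conjunct2, THEN conjunct1]
    S[THEN conjunct2, THEN conjunct2, THEN conjunct2, THEN conjunct1]
    S[THEN conjunct2, THEN conjunct2, THEN conjunct2, THEN conjunct2]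
  have SVe: "SV n k t = c + (t + 1) * k" for t by (simp add: SV_def c_def algebra_simps)
  have ex: "execs (replicate 24 (Add 1 1 0) @ concat (map svc [0..<24]) @ pro3) m = execs pro3 m2"
    unfolding execs_append m1_def m2_def ..
  have m3: "execs pro3 m2 = m2(2 := int (n + 49 * k), 1 := int n, 21 := 1, 3 := int bp, 4 := int bu, 5 := int bq)"
    using sv(1,2) by (simp add: pro3_def c_def BP_def BU_def BQ_def BW_def algebra_simps fun_eq_iff)
  show "PP (execs (replicate 24 (Add 1 1 0) @ concat (map svc [0..<24]) @ pro3) m) \<and>
    accs (replicate 24 (Add 1 1 0) @ concat (map svc [0..<24]) @ pro3) m \<subseteq> AA"
  proof
    show "PP (execs (replicate 24 (Add 1 1 0) @ concat (map svc [0..<24]) @ pro3) m)"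
      unfolding ex m3 PP_def
    proof (intro conjI allI impI)
      show "lay (m2(2 := int (n + 49 * k), 1 := int n, 21 := 1, 3 := int bp, 4 := int bu, 5 := int bq))"
        using sv(1) by (simp add: lay_def BW_def)
    next
      fix t assume t: "t < 24" "t < n"
      have "SV n k t \<noteq> 1" "SV n k t \<noteq> 2" "SV n k t \<noteq> 3" "SV n k t \<noteq> 4" "SV n k t \<noteq> 5" "SV n k t \<noteq> 21"
        using c26 by (auto simp: SVe)
      then show "(m2(2 := int (n + 49 * k), 1 := int n, 21 := 1, 3 := int bp, 4 := int bu, 5 := int bq)) (SV n k t) = int (w ! t)"
        using sv(3) t m1e m0 lw by (simp add: SVe input_mem_def)
    next
      fix t assume t: "24 \<le> t" "t < n"
      have "\<forall>t'<24. 2 + t \<noteq> c + (t' + 1) * k" using t k1 by (auto simp: c_def)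
      then have "m2 (2 + t) = m1 (2 + t)" using sv(4) by simp
      then show "(m2(2 := int (n + 49 * k), 1 := int n, 21 := 1, 3 := int bp, 4 := int bu, 5 := int bq)) (2 + t) = int (w ! t)"
        using t m1e m0 lw by (simp add: input_mem_def)
    next
      fix a assume a: "bw \<le> a"
      have a26: "26 \<le> a" "n + 2 \<le> a" using a bw_ge by auto
      have "\<forall>t<24. a \<noteq> c + (t + 1) * k"
      proof (intro allI impI)
        fix t :: nat assume "t < 24"
        then have tk: "(t + 1) * k \<le> 24 * k" by (intro mult_le_mono1) simp
        have ab: "n + 49 * k \<le> a" using a by (simp add: BW_def)
        show "a \<noteq> c + (t + 1) * k" unfolding c_def using ab tk k1 by linarith
      qed
      then have "m2 a = m1 a" using sv(4) a26 by simp
      then show "(m2(2 := int (n + 49 * k), 1 := int n, 21 := 1, 3 := int bp, 4 := int bu, 5 := int bq)) a = 0"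
        using a26 m1e m0 lw by (simp add: input_mem_def)
    qed
  next
    have a1: "accs (replicate 24 (Add 1 1 0)) m \<subseteq> AA" using accs_rep[of 24 m] by auto
    have a2: "accs (concat (map svc [0..<24])) m1 \<subseteq> AA"
    proof -
      have X1: "{0, 1} \<subseteq> AA" by simp
      have X2: "(\<lambda>t. 2 + t) ` {..<24} \<subseteq> AA"
      proof
        fix x assume "x \<in> (\<lambda>t. 2 + t) ` {..<(24::nat)}"
        then obtain t :: nat where "t < 24" "x = 2 + t" by blast
        then have "x < 26" by simp
        then show "x \<in> AA" by (rule AA_var)
      qed
      have X3: "(\<lambda>t. c + (t + 1) * k) ` {..<24} \<subseteq> AA"
      proof
        fix x assume "x \<in> (\<lambda>t. c + (t + 1) * k) ` {..<(24::nat)}"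
        then obtain t :: nat where t: "t < 24" "x = c + (t + 1) * k" by blast
        then have "x = SV n k t" using SVe by simp
        moreover have "SV n k t \<in> SV n k ` {..<24}" using t by blast
        ultimately show "x \<in> AA" unfolding Aall_def by blast
      qed
      show ?thesis using sv(5) X1 X2 X3 by blast
    qed
    have a3: "accs pro3 m2 \<subseteq> AA" by (simp add: pro3_def)
    show "accs (replicate 24 (Add 1 1 0) @ concat (map svc [0..<24]) @ pro3) m \<subseteq> AA"
      unfolding accs_append using a1 a2 a3 unfolding m1_def m2_def by blast
  qed
qed

end


definition cbody :: com where
  "cbody = Seq (seqs [LoadConst 22 24, Sub 21 6 22])
          (Seq (IfNeg 21 (seqs [LoadConst 22 25, Add 22 22 6, Mul 22 22 0, Add 22 1 22, LoadInd 23 22])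
                         (seqs [LoadConst 22 2, Add 22 22 6, LoadInd 23 22]))
               (seqs [Add 24 2 6, StoreInd 24 23, LoadConst 21 1, Add 6 6 21, Sub 7 7 21]))"

context inp begin

definition SVok :: "mem \<Rightarrow> bool" where
  "SVok m \<longleftrightarrow> (\<forall>t<24. t < n \<longrightarrow> m (SV n k t) = int (w ! t))"

definition HIok :: "mem \<Rightarrow> bool" where
  "HIok m \<longleftrightarrow> (\<forall>t. 24 \<le> t \<longrightarrow> t < n \<longrightarrow> m (2 + t) = int (w ! t))"

lemma SV_ge: "t < 24 \<Longrightarrow> 50 \<le> SV n k t \<and> SV n k t < bw"
proof -
  assume t: "t < 24"
  have "(25 + t) * k \<ge> 25 * 2" using k2 by (intro mult_le_mono) auto
  moreover have "(25 + t) * k < 49 * k" using t k2 by simp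
  ultimately show ?thesis by (simp add: SV_def BW_def)
qed

lemma SVok_upd[simp]: assumes "x < 26" shows "SVok (m(x := v)) = SVok m"
proof -
  have ne: "t < 24 \<Longrightarrow> SV n k t \<noteq> x" for t using SV_ge[of t] assms by auto
  show ?thesis unfolding SVok_def using ne by auto
qed

lemma SVok_W[simp]: "SVok (m(bw + s := v)) = SVok m"
proof -
  have ne: "t < 24 \<Longrightarrow> SV n k t \<noteq> bw + s" for t using SV_ge[of t] by auto
  show ?thesis unfolding SVok_def using ne by auto
qed

lemma HIok_upd[simp]: "x < 26 \<Longrightarrow> HIok (m(x := v)) = HIok m"
  unfolding HIok_def by auto

lemma HIok_W[simp]: "HIok (m(bw + s := v)) = HIok m"
  unfolding HIok_def using bw_ge by auto

definition IC :: "nat \<Rightarrow> mem \<Rightarrow> bool" where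
  "IC t m \<longleftrightarrow> lay m \<and> m 6 = int t \<and> m 7 = int (n - t) \<and> (\<forall>s<t. m (bw + s) = int (w ! s))
     \<and> SVok m \<and> HIok m \<and> (\<forall>a. bw + t \<le> a \<longrightarrow> m a = 0)"

lemma IC_upd[simp]: "8 \<le> x \<Longrightarrow> x < 26 \<Longrightarrow> IC t (m(x := v)) = IC t m"
  using bw_ge by (simp add: IC_def)

lemma cbody_ok:
  assumes t: "t < n"
  shows "hoare (IC t) cbody (IC (t + 1)) 20 AA"
proof -
  define R1 where "R1 m \<longleftrightarrow> IC t m \<and> m 21 = int t - 24" for m
  define R2 where "R2 m \<longleftrightarrow> IC t m \<and> m 23 = int (w ! t)" for m
  have s1: "hoare (IC t) (seqs [LoadConst 22 24, Sub 21 6 22]) R1 2 AA"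
  proof (rule h_seqs')
    fix m assume h: "IC t m"
    then show "R1 (execs [LoadConst 22 24, Sub 21 6 22] m) \<and> accs [LoadConst 22 24, Sub 21 6 22] m \<subseteq> AA"
      using bw_ge by (simp add: R1_def IC_def)
  qed auto
  have s2: "hoare R1 (IfNeg 21 (seqs [LoadConst 22 25, Add 22 22 6, Mul 22 22 0, Add 22 1 22, LoadInd 23 22])
                         (seqs [LoadConst 22 2, Add 22 22 6, LoadInd 23 22])) R2 7 AA"
  proof (rule h_ifneg')
    show "hoare (\<lambda>m. R1 m \<and> m 21 < 0) (seqs [LoadConst 22 25, Add 22 22 6, Mul 22 22 0, Add 22 1 22, LoadInd 23 22]) R2 5 AA"
    proof (rule h_seqs')
      fix m assume h: "R1 m \<and> m 21 < 0"
      then have f: "IC t m" "t < 24" by (auto simp: R1_def)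
      then have g: "lay m" "m 6 = int t" "SVok m" by (auto simp: IC_def)
      note l = lay_facts[OF g(1)]
      have ad: "int n + (25 + int t) * int k = int (SV n k t)" by (simp add: SV_def)
      have sv: "m (SV n k t) = int (w ! t)" using g(3) f(2) t by (simp add: SVok_def)
      have svA: "SV n k t \<in> AA" using f(2) by (auto simp: Aall_def)
      show "R2 (execs [LoadConst 22 25, Add 22 22 6, Mul 22 22 0, Add 22 1 22, LoadInd 23 22] m) \<and>
         accs [LoadConst 22 25, Add 22 22 6, Mul 22 22 0, Add 22 1 22, LoadInd 23 22] m \<subseteq> AA"
        using f g l ad sv svA SV_ge[OF f(2)] by (simp add: R2_def)
    qed auto
  next
    show "hoare (\<lambda>m. R1 m \<and> \<not> m 21 < 0) (seqs [LoadConst 22 2, Add 22 22 6, LoadInd 23 22]) R2 3 AA"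
    proof (rule h_seqs')
      fix m assume h: "R1 m \<and> \<not> m 21 < 0"
      then have f: "IC t m" "24 \<le> t" by (auto simp: R1_def)
      then have g: "lay m" "m 6 = int t" "HIok m" by (auto simp: IC_def)
      have hv: "m (2 + t) = int (w ! t)" using g(3) f(2) t by (simp add: HIok_def)
      have hA: "2 + t \<in> AA" using t by (simp add: Aall_def)
      show "R2 (execs [LoadConst 22 2, Add 22 22 6, LoadInd 23 22] m) \<and>
         accs [LoadConst 22 2, Add 22 22 6, LoadInd 23 22] m \<subseteq> AA"
        using f g hv hA by (simp add: R2_def nat_add_distrib)
    qed auto
  qed auto
  have s3: "hoare R2 (seqs [Add 24 2 6, StoreInd 24 23, LoadConst 21 1, Add 6 6 21, Sub 7 7 21]) (IC (t + 1)) 5 AA"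
  proof (rule h_seqs')
    fix m assume h: "R2 m"
    then have f: "lay m" "m 6 = int t" "m 7 = int (n - t)" "\<forall>s<t. m (bw + s) = int (w ! s)"
      "SVok m" "HIok m" "\<forall>a. bw + t \<le> a \<longrightarrow> m a = 0" "m 23 = int (w ! t)"
      by (auto simp: R2_def IC_def)
    note l = lay_facts[OF f(1)]
    have c1: "\<forall>s<t + 1. (m(24 := int bw + int t, bw + t := int (w ! t))) (bw + s) = int (w ! s)"
      using f(4) by (auto simp: less_Suc_eq)
    have c2: "\<forall>a. bw + (t + 1) \<le> a \<longrightarrow> (m(24 := int bw + int t, bw + t := int (w ! t))) a = 0"
      using f(7) bw_ge by auto
    have c3: "lay (m(24 := int bw + int t, bw + t := int (w ! t)))" "SVok (m(24 := int bw + int t, bw + t := int (w ! t)))"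
      "HIok (m(24 := int bw + int t, bw + t := int (w ! t)))" using f by simp_all
    show "IC (t + 1) (execs [Add 24 2 6, StoreInd 24 23, LoadConst 21 1, Add 6 6 21, Sub 7 7 21] m) \<and>
       accs [Add 24 2 6, StoreInd 24 23, LoadConst 21 1, Add 6 6 21, Sub 7 7 21] m \<subseteq> AA"
      using f l c1 c2 c3 t bw_ge by (simp add: IC_def of_nat_diff)
  qed auto
  show ?thesis unfolding cbody_def
    by (rule h_seq'[OF s1 h_seq'[OF s2 s3]]) auto
qed


definition cloop :: com where "cloop = While 7 cbody"

lemma cloop_ok: "hoare (IC 0) cloop (IC n) (n * 22 + 1) AA"
proof -
  let ?J = "\<lambda>t m. t \<le> n \<and> IC t m"
  have hw: "hoare (?J 0) (While 7 cbody) (?J n) (n * (20 + 2) + 1) AA"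
  proof (rule h_for)
    fix t m assume "?J t m"
    then show "t \<le> n \<and> m 7 = int (n - t)" by (simp add: IC_def)
  next
    fix t assume t: "t < n"
    show "hoare (?J t) cbody (?J (Suc t)) 20 AA"
      using h_conseq[OF cbody_ok[OF t]] t by simp
  qed simp
  show ?thesis unfolding cloop_def by (rule h_conseq[OF hw]) auto
qed

lemma cinit_ok: "hoare PP (seqs [LoadConst 6 0, LoadConst 21 0, Add 7 1 21]) (IC 0) 3 AA"
proof (rule h_seqs')
  fix m assume h: "PP m"
  then have f: "lay m" "SVok m" "HIok m" "\<forall>a. bw \<le> a \<longrightarrow> m a = 0" by (auto simp: PP_def SVok_def HIok_def)
  note l = lay_facts[OF f(1)]
  show "IC 0 (execs [LoadConst 6 0, LoadConst 21 0, Add 7 1 21] m) \<and> accs [LoadConst 6 0, LoadConst 21 0, Add 7 1 21] m \<subseteq> AA"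
    using f l bw_ge by (simp add: IC_def)
qed auto

definition IPw :: "nat \<Rightarrow> mem \<Rightarrow> bool" where
  "IPw e m \<longleftrightarrow> lay m \<and> m 6 = int e \<and> m 7 = int (n - e) \<and> Wok m \<and> (\<forall>e'\<le>e. m (bp + e') = int (k ^ e'))
     \<and> (\<forall>a. bp + e < a \<longrightarrow> m a = 0)"

lemma pinit_ok: "hoare (IC n) (seqs [LoadConst 21 1, StoreInd 3 21, LoadConst 6 0, LoadConst 21 0, Add 7 1 21]) (IPw 0) 5 AA"
proof (rule h_seqs')
  fix m assume h: "IC n m"
  then have f: "lay m" "\<forall>s<n. m (bw + s) = int (w ! s)" "\<forall>a. bw + n \<le> a \<longrightarrow> m a = 0" by (auto simp: IC_def)
  note l = lay_facts[OF f(1)]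
  have bpe: "bp = bw + n" by (simp add: BP_def)
  have w: "Wok (m(21 := 1, bp := 1))" "Wok (m(bp := 1))" "lay (m(bp := 1))" "lay (m(21 := 1, bp := 1))"
    using f(1,2) bw_ge by (auto simp: Wok_def bpe lay_def)
  have z: "\<forall>a. bp < a \<longrightarrow> (m(21 := 1, bp := 1)) a = 0" using f(3) bw_ge by (auto simp: bpe)
  have bA: "bp \<in> AA" using AA_P[of 0] by simp
  have bpg: "26 \<le> bp" using bw_ge by (simp add: bpe)
  show "IPw 0 (execs [LoadConst 21 1, StoreInd 3 21, LoadConst 6 0, LoadConst 21 0, Add 7 1 21] m) \<and>
    accs [LoadConst 21 1, StoreInd 3 21, LoadConst 6 0, LoadConst 21 0, Add 7 1 21] m \<subseteq> AA"
    using f l w z bA bw_ge bpg by (simp add: IPw_def)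
qed auto

definition pbody :: com where
  "pbody = seqs [Add 21 3 6, LoadInd 22 21, Mul 22 22 0, LoadConst 23 1, Add 21 21 23, StoreInd 21 22, Add 6 6 23, Sub 7 7 23]"

lemma pbody_ok:
  assumes e: "e < n"
  shows "hoare (IPw e) pbody (IPw (e + 1)) 8 AA"
  unfolding pbody_def
proof (rule h_seqs')
  fix m assume h: "IPw e m"
  then have f: "lay m" "m 6 = int e" "m 7 = int (n - e)" "Wok m" "\<forall>e'\<le>e. m (bp + e') = int (k ^ e')"
    "\<forall>a. bp + e < a \<longrightarrow> m a = 0" by (auto simp: IPw_def)
  note l = lay_facts[OF f(1)]
  have pv: "m (bp + e) = int (k ^ e)" using f(5) by simp
  have ad: "nat (int bp + int e + 1) = Suc (bp + e)" by simp
  have eA: "bp + e \<in> AA" "Suc (bp + e) \<in> AA" using e AA_P[of "e + 1"] by simp_all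
  have bpe: "bp = bw + n" by (simp add: BP_def)
  have ne1: "\<And>s. s < n \<Longrightarrow> bw + s \<noteq> Suc (bp + e)" using bpe by simp
  have bpg: "26 \<le> bp" using bw_ge bpe by simp
  show "IPw (e + 1) (execs [Add 21 3 6, LoadInd 22 21, Mul 22 22 0, LoadConst 23 1, Add 21 21 23, StoreInd 21 22, Add 6 6 23, Sub 7 7 23] m) \<and>
    accs [Add 21 3 6, LoadInd 22 21, Mul 22 22 0, LoadConst 23 1, Add 21 21 23, StoreInd 21 22, Add 6 6 23, Sub 7 7 23] m \<subseteq> AA"
    using f l pv ad eA e bw_ge ne1 bpg
    by (auto simp: IPw_def Wok_def lay_def le_Suc_eq of_nat_diff)
qed auto

definition ploop :: com where "ploop = While 7 pbody"

lemma ploop_ok: "hoare (IPw 0) ploop (IPw n) (n * 10 + 1) AA"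
proof -
  let ?J = "\<lambda>e m. e \<le> n \<and> IPw e m"
  have hw: "hoare (?J 0) (While 7 pbody) (?J n) (n * (8 + 2) + 1) AA"
  proof (rule h_for)
    fix e m assume "?J e m"
    then show "e \<le> n \<and> m 7 = int (n - e)" by (simp add: IPw_def)
  next
    fix e assume e: "e < n"
    show "hoare (?J e) pbody (?J (Suc e)) 8 AA"
      using h_conseq[OF pbody_ok[OF e]] e by simp
  qed simp
  show ?thesis unfolding ploop_def by (rule h_conseq[OF hw]) auto
qed

lemma init_ok: "hoare (IPw n) (seqs [LoadConst 6 0, LoadConst 21 0, Add 7 1 21, LoadConst 17 0]) (IO 0) 4 AA"
proof (rule h_seqs')
  fix m assume h: "IPw n m"
  then have f: "lay m" "Wok m" "\<forall>e'\<le>n. m (bp + e') = int (k ^ e')" "\<forall>a. bp + n < a \<longrightarrow> m a = 0"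
    by (auto simp: IPw_def)
  note l = lay_facts[OF f(1)]
  have p: "POWok m" using f(3) by (simp add: POWok_def)
  have q: "NQok 0 m"
  proof -
    have "m (bq + d) = int (nq 0 d)" for d
    proof -
      have "bp + n < bq + d" by (simp add: reg_facts)
      then have "m (bq + d) = 0" using f(4) by simp
      moreover have "nq 0 d = 0" by (simp add: nq_def hasper_def)
      ultimately show ?thesis by simp
    qed
    then show ?thesis by (simp add: NQok_def)
  qed
  have u: "Uok 0 m" by (simp add: Uok_def)
  show "IO 0 (execs [LoadConst 6 0, LoadConst 21 0, Add 7 1 21, LoadConst 17 0] m) \<and>
    accs [LoadConst 6 0, LoadConst 21 0, Add 7 1 21, LoadConst 17 0] m \<subseteq> AA"
    using f l p q u by (simp add: IO_def accv_def)
qed auto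

lemma final_ok: "hoare (IO n) (seqs [LoadConst 21 1, Add 0 17 21]) (\<lambda>m. m 0 = int (rankB k w)) 2 AA"
proof (rule h_seqs')
  fix m assume h: "IO n m"
  then have f: "m 17 = int (accv n)" by (simp add: IO_def)
  have r: "rankB k w = 1 + accv n"
    using rank_formula[of k w] wk lw by (simp add: word_over_def accv_def)
  show "(execs [LoadConst 21 1, Add 0 17 21] m) 0 = int (rankB k w) \<and> accs [LoadConst 21 1, Add 0 17 21] m \<subseteq> AA"
    using f r by simp
qed auto

end

definition prog :: com where
  "prog = Seq prologue (Seq (seqs [LoadConst 6 0, LoadConst 21 0, Add 7 1 21]) (Seq inp.cloop
     (Seq (seqs [LoadConst 21 1, StoreInd 3 21, LoadConst 6 0, LoadConst 21 0, Add 7 1 21]) (Seq inp.ploop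
     (Seq (seqs [LoadConst 6 0, LoadConst 21 0, Add 7 1 21, LoadConst 17 0]) (Seq inp.oloop (seqs [LoadConst 21 1, Add 0 17 21])))))))"

context inp begin

definition Ttot :: nat where
  "Ttot = 84 + 3 + (n * 22 + 1) + 5 + (n * 10 + 1) + 4 + (n * (TO + 2) + 1) + 2"

lemma prog_ok: "hoare (\<lambda>m. m = input_mem k w) prog (\<lambda>m. m 0 = int (rankB k w)) Ttot AA"
  unfolding prog_def
  by (rule h_seq'[OF prologue_ok h_seq'[OF cinit_ok h_seq'[OF cloop_ok h_seq'[OF pinit_ok
        h_seq'[OF ploop_ok h_seq'[OF init_ok h_seq'[OF oloop_ok final_ok]]]]]]]) (auto simp: Ttot_def)

end


context inp begin

lemma Ttot_bound: "Ttot \<le> 300 * k * n ^ 3"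
proof -
  have n1': "1 \<le> n" by (rule n1)
  have k1: "1 \<le> k" using k2 by simp
  have a1: "n \<le> n ^ 3" using n1' by (simp add: power3_eq_cube)
  have a2: "n * n \<le> n ^ 3" using n1' by (simp add: power3_eq_cube)
  have a3: "1 \<le> n ^ 3" using n1' by simp
  have X: "n ^ 3 \<le> k * n ^ 3" using k1 by simp
  have b1: "k * n \<le> k * n ^ 3" using a1 by simp
  have b2: "k * (n * n) \<le> k * n ^ 3" using a2 by simp
  have b3: "k * n ^ 3 = k * (n * (n * n))" by (simp add: power3_eq_cube)
  have e: "Ttot = 101 + 54 * n + 16 * (n * n) + 42 * (k * (n * (n * n))) + 16 * (k * (n * n)) + 12 * (k * n)"
    by (simp add: Ttot_def TO_def algebra_simps)
  show ?thesis unfolding e using a1 a2 a3 X b1 b2 b3 by linarith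
qed

lemma card_AA: "card AA \<le> 60 * n"
proof -
  have "card AA \<le> card ({..<26::nat} \<union> SV n k ` {..<24} \<union> {bw..<bq + n + 1}) + card {..<n+2}"
    unfolding Aall_def by (rule card_Un_le)
  also have "card ({..<26::nat} \<union> SV n k ` {..<24} \<union> {bw..<bq + n + 1}) \<le> card ({..<26::nat} \<union> SV n k ` {..<24}) + card {bw..<bq + n + 1}"
    by (rule card_Un_le)
  also have "card ({..<26::nat} \<union> SV n k ` {..<24}) \<le> card {..<26::nat} + card (SV n k ` {..<24})"
    by (rule card_Un_le)
  also have "card (SV n k ` {..<24}) \<le> 24" using card_image_le[of "{..<24::nat}" "SV n k"] by simp
  also have "card {bw..<bq + n + 1} = 4 * n + 3" by (simp add: reg_facts)
  finally show ?thesis using n1 by simp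
qed

end

theorem theorem9:
  shows "\<exists>(P :: instr list) (c :: nat).
    \<forall>k n w. n \<ge> 1 \<longrightarrow> k \<ge> 2 \<longrightarrow> length w = n \<longrightarrow> word_over k w \<longrightarrow>
      (\<exists>t. t \<le> c * k * n ^ 3
         \<and> halted P (run P t (init_config k w))
         \<and> snd (run P t (init_config k w)) 0 = int (rankB k w)
         \<and> card ({..<n + 2} \<union> used_cells P t (init_config k w)) \<le> c * n)"
proof (rule exI[of _ "compile 0 prog"], rule exI[of _ 300], intro allI impI)
  fix k n :: nat and w :: "nat list"
  assume n1: "n \<ge> 1" and k2: "k \<ge> 2" and lw: "length w = n" and wo: "word_over k w"
  interpret inp k n w using n1 k2 lw wo by unfold_locales (auto simp: word_over_def)
  obtain t S m' where r: "bs prog (input_mem k w) t S m'" "m' 0 = int (rankB k w)" "t \<le> Ttot" "S \<subseteq> AA"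
    using prog_ok unfolding hoare_def by blast
  note top = bs_top[OF r(1)]
  have ic: "init_config k w = (0, input_mem k w)" by (simp add: init_config_def)
  show "\<exists>t. t \<le> 300 * k * n ^ 3
         \<and> halted (compile 0 prog) (run (compile 0 prog) t (init_config k w))
         \<and> snd (run (compile 0 prog) t (init_config k w)) 0 = int (rankB k w)
         \<and> card ({..<n + 2} \<union> used_cells (compile 0 prog) t (init_config k w)) \<le> 300 * n"
  proof (intro exI conjI)
    show "t \<le> 300 * k * n ^ 3" using r(3) Ttot_bound by simp
    show "halted (compile 0 prog) (run (compile 0 prog) t (init_config k w))"
      using top unfolding ic by (simp add: halted_def)
    show "snd (run (compile 0 prog) t (init_config k w)) 0 = int (rankB k w)"
      using top r(2) unfolding ic by simp
    have sub: "{..<n + 2} \<union> used_cells (compile 0 prog) t (init_config k w) \<subseteq> AA"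
      using top r(4) unfolding ic by (auto simp: Aall_def)
    have "card ({..<n + 2} \<union> used_cells (compile 0 prog) t (init_config k w)) \<le> card AA"
      by (rule card_mono[OF _ sub]) (simp add: Aall_def)
    then show "card ({..<n + 2} \<union> used_cells (compile 0 prog) t (init_config k w)) \<le> 300 * n"
      using card_AA by simp
  qed
qed

end
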